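(* The triple $(\mathcal{APT},[\cdot,\cdot],\rhd)$ is a post-Lie algebra. That is, $[\cdot,\cdot]$ is a Lie bracket on $\mathcal{APT}$, and for all $X,Y,Z \in \mathcal{APT}$: \[ X\rhd[Y,Z]=[X\rhd Y,Z]+[Y,X\rhd Z], \] \[ [X,Y]\rhd Z=X\rhd(Y\rhd Z)-(X\rhd Y)\rhd Z-Y\rhd(X\rhd Z)+(Y\rhd X)\rhd Z. \]
   Context: Work over a fixed ground field. A planar rooted tree is a finite rooted tree, with edges oriented away from the root, together with a total order on the outgoing edges of each vertex; $\mathcal{PT}$ is the span of isomorphism classes of planar rooted trees. $\mathrm{Lie}(\mathcal{PT})$ is the free Lie algebra on $\mathcal{PT}$, with bracket $[\cdot,\cdot]$. For planar trees $t_1,t_2$, $t_1\rhd t_2$ is the sum, over all vertices $v$ of $t_2$, of the planar tree obtained by adding an edge from $v$ to the root of $t_1$ as the leftmost outgoing edge of $v$. It is extended to $\mathrm{Lie}(\mathcal{PT})$ by the rules \[ t_1\rhd[t_2,t_3]=[t_1\rhd t_2,t_3]+[t_2,t_1\rhd t_3], \] \[ [t_1,t_2]\rhd t_3=t_1\rhd(t_2\rhd t_3)-(t_1\rhd t_2)\rhd t_3-t_2\rhd(t_1\rhd t_3)+(t_2\rhd t_1)\rhd t_3. \] A planar aroma is an isomorphism class of finite connected directed graphs (loops allowed) in which every vertex has exactly one incoming edge, together with a total order on the outgoing edges at each vertex. $\mathcal{PA}$ is their span and $S(\mathcal{PA})$ is the symmetric algebra on $\mathcal{PA}$. For a planar tree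 $t$ and a monomial $\alpha\in S(\mathcal{PA})$, $\rho(t)(\alpha)$ is the sum, over all vertices $v$ of all factors of $\alpha$, of the monomial obtained by adding an edge from $v$ to the root of $t$ as the leftmost outgoing edge of $v$; this is extended linearly in $\alpha$. For Lie polynomials, \[ \rho([t_1,t_2])=\rho(t_1)\rho(t_2)-\rho(t_1\rhd t_2)-\rho(t_2)\rho(t_1)+\rho(t_2\rhd t_1). \] Set $\mathcal{APT}=S(\mathcal{PA})\otimes \mathrm{Lie}(\mathcal{PT})$, with elements written $\alpha t$. Define, for $\alpha_i\in S(\mathcal{PA})$ and $t_i\in\mathrm{Lie}(\mathcal{PT})$ (extended bilinearly): \[ [\alpha_1t_1,\alpha_2t_2]=\alpha_1\alpha_2[t_1,t_2], \] \[ \alpha_1t_1\rhd\alpha_2t_2=\alpha_1\,\rho(t_1)(\alpha_2)\,t_2+\alpha_1\alpha_2\,(t_1\rhd t_2). \] *)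

theory Defs
  imports Main "HOL-Library.Poly_Mapping" "HOL-Library.Multiset"
begin

definition smul :: "'k::comm_ring_1 \<Rightarrow> ('a \<Rightarrow>\<^sub>0 'k) \<Rightarrow> ('a \<Rightarrow>\<^sub>0 'k)" where
  "smul c x = Poly_Mapping.map (\<lambda>v. c * v) x"

definition lin :: "('a \<Rightarrow> ('b \<Rightarrow>\<^sub>0 'k::comm_ring_1)) \<Rightarrow> ('a \<Rightarrow>\<^sub>0 'k) \<Rightarrow> ('b \<Rightarrow>\<^sub>0 'k)" where
  "lin f x = (\<Sum>a\<in>Poly_Mapping.keys x. smul (Poly_Mapping.lookup x a) (f a))"

definition bilin :: "('a \<Rightarrow> 'b \<Rightarrow> ('c \<Rightarrow>\<^sub>0 'k::comm_ring_1)) \<Rightarrow> ('a \<Rightarrow>\<^sub>0 'k) \<Rightarrow> ('b \<Rightarrow>\<^sub>0 'k) \<Rightarrow> ('c \<Rightarrow>\<^sub>0 'k)" where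
  "bilin f x y = lin (\<lambda>a. lin (\<lambda>b. f a b) y) x"

text \<open>A planar rooted tree up to isomorphism is a root together with the ordered
  list of its subtrees (children in the order of the outgoing edges).\<close>
datatype ptree = Node "ptree list"

fun graft_at :: "('a \<Rightarrow> 'a list) \<Rightarrow> 'a list \<Rightarrow> 'a list list" where
  "graft_at f [] = []"
| "graft_at f (x # xs) = List.map (\<lambda>y. y # xs) (f x) @ List.map (\<lambda>l. x # l) (graft_at f xs)"

text \<open>graft t s: list (with multiplicity) of all planar trees obtained from s by adding an
  edge from a vertex of s to the root of t, as the leftmost outgoing edge of that vertex.\<close>
fun graft :: "ptree \<Rightarrow> ptree \<Rightarrow> ptree list"
and graft_list :: "ptree \<Rightarrow> ptree list \<Rightarrow> ptree list list" where
  "graft t (Node cs) = Node (t # cs) # List.map Node (graft_list t cs)"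
| "graft_list t [] = []"
| "graft_list t (c # cs) = List.map (\<lambda>s. s # cs) (graft t c) @ List.map (\<lambda>l. c # l) (graft_list t cs)"

text \<open>A planar aroma is a connected graph with every in-degree 1: a directed cycle of
  vertices v_1 -> ... -> v_n -> v_1 (n >= 1), each with planar trees attached.  A cycle vertex
  is encoded by (L, R): its ordered outgoing edges are L, then the cycle edge, then R.
  The raw cycle (x, xs) stands for the nonempty list x # xs; isomorphism = cyclic rotation.\<close>
type_synonym cvert = "ptree list \<times> ptree list"

definition arel :: "(cvert \<times> cvert list) \<Rightarrow> (cvert \<times> cvert list) \<Rightarrow> bool" where
  "arel p q \<longleftrightarrow> (\<exists>n. fst q # snd q = rotate n (fst p # snd p))"

lemma rotate_back:
  assumes "xs \<noteq> []"
  shows "rotate (length xs - n mod length xs) (rotate n xs) = xs"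
proof -
  have "rotate (length xs - n mod length xs) (rotate n xs) = rotate (length xs - n mod length xs + n) xs"
    by (simp add: rotate_rotate)
  also have "\<dots> = xs"
  proof (rule rotate_id)
    have L: "length xs > 0" using assms by simp
    have "(length xs - n mod length xs + n) mod length xs
          = (length xs - n mod length xs + n mod length xs) mod length xs"
      by (simp add: mod_add_right_eq)
    also have "\<dots> = length xs mod length xs"
      using L by (simp add: less_imp_le)
    finally show "(length xs - n mod length xs + n) mod length xs = 0" by simp
  qed
  finally show ?thesis .
qed

lemma arel_equivp: "equivp arel"
proof (rule equivpI)
  show "reflp arel" unfolding reflp_def arel_def by (metis rotate0 id_apply)
  show "symp arel" unfolding symp_def arel_def
    by (metis list.distinct(1) length_rotate rotate_back)
  show "transp arel" unfolding transp_def arel_def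
    by (metis rotate_rotate)
qed

quotient_type aroma = "cvert \<times> cvert list" / arel
  by (rule arel_equivp)

fun graft_cv :: "ptree \<Rightarrow> cvert \<Rightarrow> cvert list" where
  "graft_cv t (l, r) = (t # l, r) # List.map (\<lambda>l'. (l', r)) (graft_list t l)
                        @ List.map (\<lambda>r'. (l, r')) (graft_list t r)"

text \<open>All aromas obtained from a by adding an edge from one of its vertices to the root of t
  as leftmost outgoing edge (with multiplicity; computed on a representative).\<close>
definition graft_aroma :: "ptree \<Rightarrow> aroma \<Rightarrow> aroma list" where
  "graft_aroma t a = (let p = rep_aroma a in
     List.map (\<lambda>l. abs_aroma (hd l, tl l)) (graft_at (graft_cv t) (fst p # snd p)))"

text \<open>S(PA): monomials are finite multisets of planar aromas.\<close>
type_synonym 'k SPA = "aroma multiset \<Rightarrow>\<^sub>0 'k"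
text \<open>Tensor algebra T(PT): basis = words of planar trees; Lie(PT) is realised inside it.\<close>
type_synonym 'k TPT = "ptree list \<Rightarrow>\<^sub>0 'k"
text \<open>S(PA) \<otimes> T(PT); APT is the subspace S(PA) \<otimes> Lie(PT).\<close>
type_synonym 'k ATPT = "(aroma multiset \<times> ptree list) \<Rightarrow>\<^sub>0 'k"

definition mulS :: "'k::field SPA \<Rightarrow> 'k SPA \<Rightarrow> 'k SPA" where
  "mulS = bilin (\<lambda>m1 m2. Poly_Mapping.single (m1 + m2) 1)"

definition commT :: "'k::field TPT \<Rightarrow> 'k TPT \<Rightarrow> 'k TPT" where
  "commT = bilin (\<lambda>w1 w2. Poly_Mapping.single (w1 @ w2) 1 - Poly_Mapping.single (w2 @ w1) 1)"

text \<open>The free Lie algebra Lie(PT): the Lie subalgebra of T(PT) (commutator bracket)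
  generated by the one-letter words.\<close>
inductive_set LiePT :: "'k::field TPT set" where
  gen: "Poly_Mapping.single [t] 1 \<in> LiePT"
| zero: "0 \<in> LiePT"
| add: "x \<in> LiePT \<Longrightarrow> y \<in> LiePT \<Longrightarrow> x + y \<in> LiePT"
| smul: "x \<in> LiePT \<Longrightarrow> smul c x \<in> LiePT"
| comm: "x \<in> LiePT \<Longrightarrow> y \<in> LiePT \<Longrightarrow> commT x y \<in> LiePT"

text \<open>Action of a single tree t: t \<rhd> on T(PT) as a derivation of concatenation,
  which restricts to the rule t\<rhd>[t2,t3] = [t\<rhd>t2,t3] + [t2,t\<rhd>t3] on Lie(PT).\<close>
definition triD :: "ptree \<Rightarrow> 'k::field TPT \<Rightarrow> 'k TPT" where
  "triD t = lin (\<lambda>w. sum_list (List.map (\<lambda>w'. Poly_Mapping.single w' 1) (graft_at (graft t) w)))"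

text \<open>Action of words (extension to the enveloping algebra):
  (a w) \<rhd> Z = a \<rhd> (w \<rhd> Z) - (a \<rhd> w) \<rhd> Z; this gives
  [t1,t2] \<rhd> Z = t1\<rhd>(t2\<rhd>Z) - (t1\<rhd>t2)\<rhd>Z - t2\<rhd>(t1\<rhd>Z) + (t2\<rhd>t1)\<rhd>Z on Lie polynomials.\<close>
primrec triWn :: "nat \<Rightarrow> ptree list \<Rightarrow> 'k::field TPT \<Rightarrow> 'k TPT" where
  "triWn 0 w Z = Z"
| "triWn (Suc n) w Z = (case w of [] \<Rightarrow> Z | a # v \<Rightarrow>
      triD a (triWn n v Z) - lin (\<lambda>v'. triWn n v' Z) (triD a (Poly_Mapping.single v 1)))"

definition triW :: "ptree list \<Rightarrow> 'k::field TPT \<Rightarrow> 'k TPT" where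
  "triW w Z = triWn (length w) w Z"

text \<open>\<rho>(t) on S(PA) for a tree t: sum over all vertices of all factors of a monomial.\<close>
definition rho1 :: "ptree \<Rightarrow> 'k::field SPA \<Rightarrow> 'k SPA" where
  "rho1 t = lin (\<lambda>\<alpha>. sum_mset (image_mset (\<lambda>a.
      sum_list (List.map (\<lambda>a'. Poly_Mapping.single (\<alpha> - {#a#} + {#a'#}) 1) (graft_aroma t a))) \<alpha>))"

text \<open>\<rho> on words: \<rho>(a w) = \<rho>(a) \<rho>(w) - \<rho>(a \<rhd> w), giving
  \<rho>([t1,t2]) = \<rho>(t1)\<rho>(t2) - \<rho>(t1\<rhd>t2) - \<rho>(t2)\<rho>(t1) + \<rho>(t2\<rhd>t1) on Lie polynomials.\<close>
primrec rhoWn :: "nat \<Rightarrow> ptree list \<Rightarrow> 'k::field SPA \<Rightarrow> 'k SPA" where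
  "rhoWn 0 w \<alpha> = \<alpha>"
| "rhoWn (Suc n) w \<alpha> = (case w of [] \<Rightarrow> \<alpha> | a # v \<Rightarrow>
      rho1 a (rhoWn n v \<alpha>) - lin (\<lambda>v'. rhoWn n v' \<alpha>) (triD a (Poly_Mapping.single v 1)))"

definition rhoW :: "ptree list \<Rightarrow> 'k::field SPA \<Rightarrow> 'k SPA" where
  "rhoW w \<alpha> = rhoWn (length w) w \<alpha>"

definition tens :: "'k::field SPA \<Rightarrow> 'k TPT \<Rightarrow> 'k ATPT" where
  "tens = bilin (\<lambda>m w. Poly_Mapping.single (m, w) 1)"

definition slice :: "aroma multiset \<Rightarrow> 'k::field ATPT \<Rightarrow> 'k TPT" where
  "slice m = lin (\<lambda>(m', w). if m' = m then Poly_Mapping.single w 1 else 0)"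

text \<open>APT = S(PA) \<otimes> Lie(PT) inside S(PA) \<otimes> T(PT).\<close>
definition APT :: "'k::field ATPT set" where
  "APT = {X. \<forall>m. slice m X \<in> LiePT}"

definition brA :: "'k::field ATPT \<Rightarrow> 'k ATPT \<Rightarrow> 'k ATPT" where
  "brA = bilin (\<lambda>(m1, w1) (m2, w2).
     Poly_Mapping.single (m1 + m2, w1 @ w2) 1 - Poly_Mapping.single (m1 + m2, w2 @ w1) 1)"

text \<open>\<alpha>1 t1 \<rhd> \<alpha>2 t2 = \<alpha>1 \<rho>(t1)(\<alpha>2) t2 + \<alpha>1\<alpha>2 (t1 \<rhd> t2).\<close>
definition triA :: "'k::field ATPT \<Rightarrow> 'k ATPT \<Rightarrow> 'k ATPT" where
  "triA = bilin (\<lambda>(m1, w1) (m2, w2).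
     tens (mulS (Poly_Mapping.single m1 1) (rhoW w1 (Poly_Mapping.single m2 1))) (Poly_Mapping.single w2 1)
   + tens (Poly_Mapping.single (m1 + m2) 1) (triW w1 (Poly_Mapping.single w2 1)))"

end

theory Submission
  imports Defs "HOL-Library.Product_Plus"
begin


section \<open>Linear algebra on finitely supported functions\<close>

abbreviation lk where "lk \<equiv> Poly_Mapping.lookup"
abbreviation sg where "sg \<equiv> Poly_Mapping.single"
abbreviation ks where "ks \<equiv> Poly_Mapping.keys"


lemma lookup_smul [simp]: "lk (smul c x) a = c * lk x a"
  unfolding smul_def by transfer (simp add: when_def)

lemma smul_single [simp]: "smul c (sg a d) = sg a (c * d)"
  by (rule poly_mapping_eqI) (simp add: lookup_single when_def)

lemma smul_add: "smul c (x + y) = smul c x + smul c y"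
  by (rule poly_mapping_eqI) (simp add: lookup_add algebra_simps)

lemma smul_add_left: "smul (c + d) x = smul c x + smul d x"
  by (rule poly_mapping_eqI) (simp add: lookup_add algebra_simps)

lemma smul_zero [simp]: "smul c 0 = 0"
  by (rule poly_mapping_eqI) simp

lemma smul_zero_left [simp]: "smul 0 x = 0"
  by (rule poly_mapping_eqI) simp

lemma smul_one [simp]: "smul 1 x = x"
  by (rule poly_mapping_eqI) simp

lemma smul_smul [simp]: "smul c (smul d x) = smul (c * d) x"
  by (rule poly_mapping_eqI) (simp add: algebra_simps)

lemma smul_minus: "smul c (- x) = - smul c x"
  by (rule poly_mapping_eqI) (simp add: algebra_simps)

lemma smul_diff: "smul c (x - y) = smul c x - smul c y"
  by (rule poly_mapping_eqI) (simp add: lookup_minus algebra_simps)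

lemma smul_sum: "smul c (sum f I) = (\<Sum>i\<in>I. smul c (f i))"
  by (induction I rule: infinite_finite_induct) (auto simp: smul_add)

lemma smul_neg1: "smul (-1) x = - x"
  by (rule poly_mapping_eqI) simp

lemma poly_expand: "x = (\<Sum>a\<in>ks x. sg a (lk x a))"
proof -
  have *: "finite I \<Longrightarrow> lk (\<Sum>a\<in>I. sg a (lk x a)) j = (if j \<in> I then lk x j else 0)" for I j
    by (induction I rule: finite_induct) (auto simp: lookup_single lookup_add when_def)
  show ?thesis by (rule poly_mapping_eqI) (simp add: * in_keys_iff)
qed

lemma lin_superset:
  assumes "finite S" "ks x \<subseteq> S"
  shows "lin f x = (\<Sum>a\<in>S. smul (lk x a) (f a))"
  unfolding lin_def using assms
  by (intro sum.mono_neutral_left) (auto simp: in_keys_iff)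

lemma lin_zero [simp]: "lin f 0 = 0"
  by (simp add: lin_def)

lemma lin_single [simp]: "lin f (sg a c) = smul c (f a)"
  by (cases "c = 0") (auto simp: lin_def)

lemma lin_add: "lin f (x + y) = lin f x + lin f y"
proof -
  let ?S = "ks x \<union> ks y"
  have "lin f (x + y) = (\<Sum>a\<in>?S. smul (lk (x + y) a) (f a))"
    by (rule lin_superset) (auto simp: keys_add)
  also have "\<dots> = (\<Sum>a\<in>?S. smul (lk x a) (f a)) + (\<Sum>a\<in>?S. smul (lk y a) (f a))"
    by (simp add: lookup_add smul_add_left sum.distrib)
  also have "\<dots> = lin f x + lin f y"
    using lin_superset[of ?S x f] lin_superset[of ?S y f] by simp
  finally show ?thesis .
qed

lemma lin_smul: "lin f (smul c x) = smul c (lin f x)"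
proof -
  have "lin f (smul c x) = (\<Sum>a\<in>ks x. smul (lk (smul c x) a) (f a))"
    by (rule lin_superset) (auto simp: in_keys_iff)
  then show ?thesis by (simp add: lin_def smul_sum)
qed

definition lmap :: "(('a \<Rightarrow>\<^sub>0 'k::comm_ring_1) \<Rightarrow> ('b \<Rightarrow>\<^sub>0 'k)) \<Rightarrow> bool" where
  "lmap L \<longleftrightarrow> (\<forall>x y. L (x + y) = L x + L y) \<and> (\<forall>c x. L (smul c x) = smul c (L x))"

lemma lmapI: "(\<And>x y. L (x + y) = L x + L y) \<Longrightarrow> (\<And>c x. L (smul c x) = smul c (L x)) \<Longrightarrow> lmap L"
  by (simp add: lmap_def)

lemma lmap_add: "lmap L \<Longrightarrow> L (x + y) = L x + L y"
  by (simp add: lmap_def)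

lemma lmap_smul: "lmap L \<Longrightarrow> L (smul c x) = smul c (L x)"
  by (simp add: lmap_def)

lemma lmap_zero: "lmap L \<Longrightarrow> L 0 = 0"
  using lmap_smul[of L 0 0] by simp

lemma lmap_neg: "lmap L \<Longrightarrow> L (- x) = - L x"
  using lmap_smul[of L "-1" x] by (simp add: smul_neg1)

lemma lmap_diff: "lmap L \<Longrightarrow> L (x - y) = L x - L y"
  using lmap_add[of L x "- y"] lmap_neg[of L y] by simp

lemma lmap_sum: "lmap L \<Longrightarrow> L (sum f I) = (\<Sum>i\<in>I. L (f i))"
  by (induction I rule: infinite_finite_induct) (auto simp: lmap_zero lmap_add)

lemma lmap_lin [intro, simp]: "lmap (lin f)"
  by (simp add: lmap_def lin_add lin_smul)

lemma lmap_id [intro, simp]: "lmap (\<lambda>x. x)"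
  by (simp add: lmap_def)

lemma lmap_zero_fun [intro, simp]: "lmap (\<lambda>x. 0)"
  by (simp add: lmap_def)

lemma lmap_comp [intro]: "lmap f \<Longrightarrow> lmap g \<Longrightarrow> lmap (\<lambda>x. f (g x))"
  by (simp add: lmap_def)

lemma lmap_plus [intro]: "lmap f \<Longrightarrow> lmap g \<Longrightarrow> lmap (\<lambda>x. f x + g x)"
  by (simp add: lmap_def smul_add algebra_simps)

lemma lmap_minus [intro]: "lmap f \<Longrightarrow> lmap g \<Longrightarrow> lmap (\<lambda>x. f x - g x)"
  by (simp add: lmap_def smul_diff algebra_simps)

lemma lmap_uminus [intro]: "lmap f \<Longrightarrow> lmap (\<lambda>x. - f x)"
  by (simp add: lmap_def smul_minus algebra_simps)

lemma lmap_smulc [intro]: "lmap f \<Longrightarrow> lmap (\<lambda>x. smul c (f x))"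
  by (simp add: lmap_def smul_add mult.commute)

lemma lmap_sumf [intro]: "(\<And>i. lmap (f i)) \<Longrightarrow> lmap (\<lambda>x. \<Sum>i\<in>I. f i x)"
  by (induction I rule: infinite_finite_induct) auto

lemma lin_expand: "x = lin (\<lambda>a. sg a 1) x"
  unfolding lin_def by (subst poly_expand) simp

lemma lin_unique: "lmap L \<Longrightarrow> L x = lin (\<lambda>a. L (sg a 1)) x"
proof -
  assume L: "lmap L"
  have "L x = L (\<Sum>a\<in>ks x. smul (lk x a) (sg a 1))"
    by (subst lin_expand) (simp add: lin_def del: smul_single)
  also have "\<dots> = lin (\<lambda>a. L (sg a 1)) x"
    by (simp add: lmap_sum[OF L] lmap_smul[OF L] lin_def del: smul_single)
  finally show ?thesis .
qed

lemma lin_cong: "(\<And>a. a \<in> ks x \<Longrightarrow> f a = g a) \<Longrightarrow> lin f x = lin g x"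
  by (simp add: lin_def)

lemma lin_eq_keys:
  assumes "lmap f" "lmap g" "\<And>a. a \<in> ks x \<Longrightarrow> f (sg a 1) = g (sg a 1)"
  shows "f x = g x"
proof -
  have "f x = lin (\<lambda>a. f (sg a 1)) x" using assms(1) by (rule lin_unique)
  also have "\<dots> = lin (\<lambda>a. g (sg a 1)) x" using assms(3) by (rule lin_cong)
  also have "\<dots> = g x" using assms(2) by (rule lin_unique[symmetric])
  finally show ?thesis .
qed

lemma lin_ext:
  assumes "lmap f" "lmap g" "\<And>a. f (sg a 1) = g (sg a 1)"
  shows "f = g"
  using assms lin_eq_keys by blast

lemma lin_fadd: "lin (\<lambda>a. f a + g a) x = lin f x + lin g x"
  by (simp add: lin_def smul_add sum.distrib)

lemma lin_fdiff: "lin (\<lambda>a. f a - g a) x = lin f x - lin g x"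
  by (simp add: lin_def smul_diff sum_subtractf)

lemma lin_fzero [simp]: "lin (\<lambda>a. 0) x = 0"
  by (simp add: lin_def)

lemma lin_fsmul: "lin (\<lambda>a. smul c (f a)) x = smul c (lin f x)"
  by (simp add: lin_def smul_sum mult.commute)

lemma lmap_lin_param [intro]: "(\<And>a. lmap (F a)) \<Longrightarrow> lmap (\<lambda>Z. lin (\<lambda>a. F a Z) x)"
  by (rule lmapI) (simp_all add: lmap_add lmap_smul lin_fadd lin_fsmul)

lemma lmap_lin_comm: "lmap L \<Longrightarrow> L (lin f x) = lin (\<lambda>a. L (f a)) x"
  by (simp add: lin_def lmap_sum lmap_smul)

lemma bilin_single [simp]: "bilin f (sg a 1) (sg b 1) = f a b"
  by (simp add: bilin_def)

lemma lmap_bilin1 [intro, simp]: "lmap (\<lambda>x. bilin f x y)"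
  by (simp add: bilin_def)

lemma lmap_bilin2 [intro, simp]: "lmap (\<lambda>y. bilin f x y)"
  unfolding bilin_def by (rule lmap_lin_param) simp

lemma bilin_ext:
  assumes "\<And>y. lmap (\<lambda>x. F x y)" "\<And>x. lmap (\<lambda>y. F x y)"
    "\<And>y. lmap (\<lambda>x. G x y)" "\<And>x. lmap (\<lambda>y. G x y)"
    "\<And>a b. F (sg a 1) (sg b 1) = G (sg a 1) (sg b 1)"
  shows "F x y = G x y"
proof -
  have "\<And>a. F (sg a 1) y = G (sg a 1) y"
    using lin_ext[of "\<lambda>y. F (sg _ 1) y" "\<lambda>y. G (sg _ 1) y"] assms by metis
  then show ?thesis
    using lin_ext[of "\<lambda>x. F x y" "\<lambda>x. G x y"] assms by metis
qed

lemma bilin_diff: "bilin (\<lambda>a b. f a b - g a b) x y = bilin f x y - bilin g x y"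
  by (simp add: bilin_def lin_fdiff)

lemma smul_conv_mult: "smul c x = sg 0 c * (x :: 'a::monoid_add \<Rightarrow>\<^sub>0 'k::comm_ring_1)"
  unfolding smul_def by (rule mult_map_scale_conv_mult)

lemma single0_comm: "sg 0 c * (x :: 'a::monoid_add \<Rightarrow>\<^sub>0 'k::comm_ring_1) = x * sg 0 c"
proof -
  have "sg 0 c * x = (\<Sum>a\<in>ks x. sg 0 c * sg a (lk x a))"
    by (subst poly_expand) (simp add: sum_distrib_left)
  also have "\<dots> = (\<Sum>a\<in>ks x. sg a (lk x a) * sg 0 c)"
    by (simp add: mult_single mult.commute)
  also have "\<dots> = x * sg 0 c"
    by (subst (3) poly_expand) (simp add: sum_distrib_right)
  finally show ?thesis .
qed

lemma smul_mult_left: "smul c x * y = smul c (x * (y :: 'a::monoid_add \<Rightarrow>\<^sub>0 'k::comm_ring_1))"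
  by (simp add: smul_conv_mult mult.assoc)

lemma smul_mult_right: "x * smul c y = smul c (x * (y :: 'a::monoid_add \<Rightarrow>\<^sub>0 'k::comm_ring_1))"
  by (metis mult.assoc single0_comm smul_conv_mult)

lemma lmap_multl [intro, simp]: "lmap (\<lambda>x. x * (y :: 'a::monoid_add \<Rightarrow>\<^sub>0 'k::comm_ring_1))"
  by (simp add: lmap_def distrib_right smul_mult_left)

lemma lmap_multr [intro, simp]: "lmap (\<lambda>x. y * (x :: 'a::monoid_add \<Rightarrow>\<^sub>0 'k::comm_ring_1))"
  by (simp add: lmap_def distrib_left smul_mult_right)

lemma bilin_mult: "bilin (\<lambda>a b. sg (a + b) 1) x y = x * (y :: 'a::monoid_add \<Rightarrow>\<^sub>0 'k::comm_ring_1)"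
  by (rule bilin_ext[where F = "bilin _" and G = "(*)"]) (auto simp: mult_single)



section \<open>Words as a monoid\<close>

instantiation list :: (type) monoid_add
begin
definition zero_list_def: "0 = []"
definition plus_list_def: "xs + ys = xs @ ys"
instance by standard (simp_all add: zero_list_def plus_list_def)
end

lemma sg_nil_one: "sg [] (1::'k::comm_ring_1) = 1"
  by (metis single_one zero_list_def)

lemma sg_word_mult: "sg u (1::'k::comm_ring_1) * sg v 1 = sg (u @ v) 1"
  by (simp add: mult_single plus_list_def)

lemma bilin_mult_swap: "bilin (\<lambda>a b. sg (b + a) 1) x y = y * (x :: 'a::monoid_add \<Rightarrow>\<^sub>0 'k::comm_ring_1)"
  by (rule bilin_ext[where F = "bilin _" and G = "\<lambda>x y. y * x"]) (auto simp: mult_single)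

lemma commT_eq: "commT x y = x * y - y * (x :: 'k::field TPT)"
proof -
  have "commT x y = bilin (\<lambda>a b. sg (a + b) 1) x y - bilin (\<lambda>a b. sg (b + a) 1) x y"
    unfolding commT_def plus_list_def by (rule bilin_diff)
  then show ?thesis by (simp add: bilin_mult bilin_mult_swap)
qed

lemma mulS_eq: "mulS x y = x * (y :: 'k::field SPA)"
  unfolding mulS_def by (rule bilin_mult)

section \<open>Derivations\<close>

definition der :: "(('a::monoid_add \<Rightarrow>\<^sub>0 'k::comm_ring_1) \<Rightarrow> ('a \<Rightarrow>\<^sub>0 'k)) \<Rightarrow> bool" where
  "der D \<longleftrightarrow> lmap D \<and> (\<forall>x y. D (x * y) = D x * y + x * D y)"

lemma derD: "der D \<Longrightarrow> D (x * y) = D x * y + x * D y"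
  by (simp add: der_def)

lemma der_lmap: "der D \<Longrightarrow> lmap D"
  by (simp add: der_def)

lemma der_one: "der D \<Longrightarrow> D 1 = 0"
  using derD[of D 1 1] by simp

lemma der_by_basis:
  assumes L: "lmap D"
    and B: "\<And>u v. D (sg u 1 * sg v 1) = D (sg u 1) * sg v 1 + sg u 1 * D (sg v 1)"
  shows "der D"
proof -
  have "D (x * y) = D x * y + x * D y" for x y
    by (rule bilin_ext[where F = "\<lambda>x y. D (x * y)" and G = "\<lambda>x y. D x * y + x * D y"])
       (use L B in \<open>auto intro!: lmap_comp[OF L] lmap_plus lmap_comp[OF lmap_multl] lmap_comp[OF lmap_multr]\<close>)
  then show ?thesis using L by (simp add: der_def)
qed

lemma der_plus: "der D1 \<Longrightarrow> der D2 \<Longrightarrow> der (\<lambda>x. D1 x + D2 x)"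
  by (auto simp: der_def algebra_simps)

lemma der_minus: "der D1 \<Longrightarrow> der D2 \<Longrightarrow> der (\<lambda>x. D1 x - D2 x)"
  by (auto simp: der_def algebra_simps)

lemma der_zero: "der (\<lambda>x. 0)"
  by (auto simp: der_def)

lemma der_smul: "der D \<Longrightarrow> der (\<lambda>x. smul c (D x))"
  by (auto simp: der_def smul_add smul_mult_left smul_mult_right)

lemma der_comm: "der D1 \<Longrightarrow> der D2 \<Longrightarrow> der (\<lambda>x. D1 (D2 x) - D2 (D1 x))"
proof -
  assume d1: "der D1" and d2: "der D2"
  have l1: "lmap D1" and l2: "lmap D2" using d1 d2 by (auto simp: der_def)
  show ?thesis unfolding der_def
  proof (intro conjI allI)
    show "lmap (\<lambda>x. D1 (D2 x) - D2 (D1 x))" using l1 l2 by auto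
    fix x y
    show "D1 (D2 (x * y)) - D2 (D1 (x * y)) = (D1 (D2 x) - D2 (D1 x)) * y + x * (D1 (D2 y) - D2 (D1 y))"
      by (simp add: derD[OF d1] derD[OF d2] lmap_add[OF l1] lmap_add[OF l2] algebra_simps)
  qed
qed

lemma lmap_lin_param_keys:
  assumes "\<And>a. a \<in> ks x \<Longrightarrow> lmap (F a)"
  shows "lmap (\<lambda>Z. lin (\<lambda>a. F a Z) x)"
proof (rule lmapI)
  fix Z1 Z2
  have "lin (\<lambda>a. F a (Z1 + Z2)) x = lin (\<lambda>a. F a Z1 + F a Z2) x"
    by (rule lin_cong) (simp add: lmap_add assms)
  then show "lin (\<lambda>a. F a (Z1 + Z2)) x = lin (\<lambda>a. F a Z1) x + lin (\<lambda>a. F a Z2) x"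
    by (simp add: lin_fadd)
next
  fix c Z
  have "lin (\<lambda>a. F a (smul c Z)) x = lin (\<lambda>a. smul c (F a Z)) x"
    by (rule lin_cong) (simp add: lmap_smul assms)
  then show "lin (\<lambda>a. F a (smul c Z)) x = smul c (lin (\<lambda>a. F a Z) x)"
    by (simp add: lin_fsmul)
qed

lemma der_lin:
  assumes "\<And>w. w \<in> ks x \<Longrightarrow> der (F w)"
  shows "der (\<lambda>Z. lin (\<lambda>w. F w Z) x)"
  unfolding der_def
proof (intro conjI allI)
  show "lmap (\<lambda>Z. lin (\<lambda>w. F w Z) x)"
    by (rule lmap_lin_param_keys) (use assms in \<open>auto simp: der_def\<close>)
  fix u v
  have "lin (\<lambda>w. F w (u * v)) x = lin (\<lambda>w. F w u * v + u * F w v) x"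
    by (rule lin_cong) (simp add: derD assms)
  also have "\<dots> = lin (\<lambda>w. F w u * v) x + lin (\<lambda>w. u * F w v) x"
    by (rule lin_fadd)
  also have "\<dots> = lin (\<lambda>w. F w u) x * v + u * lin (\<lambda>w. F w v) x"
    by (simp add: lmap_lin_comm[OF lmap_multl] lmap_lin_comm[OF lmap_multr])
  finally show "lin (\<lambda>w. F w (u * v)) x = lin (\<lambda>w. F w u) x * v + u * lin (\<lambda>w. F w v) x" .
qed

lemma graft_at_append:
  "graft_at f (u @ v) = map (\<lambda>l. l @ v) (graft_at f u) @ map (\<lambda>l. u @ l) (graft_at f v)"
  by (induction u) auto

lemma graft_at_length: "l \<in> set (graft_at f u) \<Longrightarrow> length l = length u"
  by (induction u arbitrary: l) auto

definition gs :: "(ptree \<Rightarrow> ptree list) \<Rightarrow> ptree list \<Rightarrow> 'k::field TPT" where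
  "gs f w = sum_list (map (\<lambda>w'. sg w' 1) (graft_at f w))"

lemma triD_single: "triD a (sg w 1) = gs (graft a) w"
  by (simp add: triD_def gs_def)

lemma gs_nil [simp]: "gs f [] = 0"
  by (simp add: gs_def)

lemma sum_list_map_mult_right: "sum_list (map (\<lambda>l. f l * c) xs) = sum_list (map f xs) * (c::'a::semiring_0)"
  by (induction xs) (auto simp: algebra_simps)

lemma sum_list_map_mult_left: "sum_list (map (\<lambda>l. c * f l) xs) = (c::'a::semiring_0) * sum_list (map f xs)"
  by (induction xs) (auto simp: algebra_simps)

lemma gs_append: "gs f (u @ v) = gs f u * sg v 1 + sg u 1 * gs f v"
proof -
  have "gs f (u @ v) = sum_list (map (\<lambda>l. sg l 1 * sg v 1) (graft_at f u)) + sum_list (map (\<lambda>l. sg u 1 * sg l 1) (graft_at f v))"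
    by (simp add: gs_def graft_at_append o_def sg_word_mult)
  then show ?thesis
    by (simp add: sum_list_map_mult_right sum_list_map_mult_left gs_def)
qed

lemma lmap_triD [intro, simp]: "lmap (triD a)"
  by (simp add: triD_def)

lemma der_triD: "der (triD a)"
  by (rule der_by_basis) (simp_all add: sg_word_mult triD_single gs_append)

section \<open>Homogeneous elements\<close>

definition Hom :: "nat \<Rightarrow> 'k::field TPT set" where
  "Hom n = {x. \<forall>w\<in>ks x. length w = n}"

lemma keys_smul: "ks (smul c x) \<subseteq> ks x"
  by (auto simp: in_keys_iff)

lemma keys_lin: "ks (lin f x) \<subseteq> (\<Union>a\<in>ks x. ks (f a))"
  unfolding lin_def using keys_sum keys_smul by fastforce

lemma keys_sum_list_sg: "ks (sum_list (map (\<lambda>w. sg w (1::'k::comm_ring_1)) l)) \<subseteq> set l"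
proof (induction l)
  case (Cons a l)
  then show ?case using keys_add[of "sg a (1::'k)" "sum_list (map (\<lambda>w. sg w 1) l)"] by auto
qed simp

lemma Hom_zero [simp]: "0 \<in> Hom n" by (simp add: Hom_def)
lemma Hom_add: "x \<in> Hom n \<Longrightarrow> y \<in> Hom n \<Longrightarrow> x + y \<in> Hom n"
  using keys_add[of x y] by (auto simp: Hom_def)
lemma Hom_smul: "x \<in> Hom n \<Longrightarrow> smul c x \<in> Hom n"
  using keys_smul[of c x] by (auto simp: Hom_def)
lemma Hom_neg: "x \<in> Hom n \<Longrightarrow> - x \<in> Hom n"
  by (simp add: Hom_def)
lemma Hom_diff: "x \<in> Hom n \<Longrightarrow> y \<in> Hom n \<Longrightarrow> x - y \<in> Hom n"
  using Hom_add[of x n "- y"] Hom_neg[of y n] by simp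
lemma Hom_lin: "(\<And>a. a \<in> ks x \<Longrightarrow> f a \<in> Hom n) \<Longrightarrow> lin f x \<in> Hom n"
  using keys_lin[of f x] by (fastforce simp: Hom_def)
lemma Hom_sg: "length w = n \<Longrightarrow> sg w c \<in> Hom n"
  by (simp add: Hom_def)
lemma Hom_mult: "x \<in> Hom m \<Longrightarrow> y \<in> Hom n \<Longrightarrow> x * y \<in> Hom (m + n)"
  using keys_mult[of x y] by (fastforce simp: Hom_def plus_list_def)

lemma gs_Hom: "gs f w \<in> Hom (length w)"
  using keys_sum_list_sg[of "graft_at f w"] graft_at_length[of _ f w]
  by (auto simp: Hom_def gs_def)

lemma triD_Hom: assumes "x \<in> Hom n" shows "triD a x \<in> Hom n"
proof -
  have "triD a x = lin (\<lambda>w. gs (graft a) w) x" by (simp add: triD_def gs_def)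
  also have "\<dots> \<in> Hom n"
  proof (rule Hom_lin)
    fix w assume "w \<in> ks x"
    then have "length w = n" using assms by (simp add: Hom_def)
    then show "gs (graft a) w \<in> Hom n" using gs_Hom by metis
  qed
  finally show ?thesis .
qed

section \<open>Generic word actions\<close>

primrec genWn :: "(ptree \<Rightarrow> ('b \<Rightarrow>\<^sub>0 'k::field) \<Rightarrow> ('b \<Rightarrow>\<^sub>0 'k)) \<Rightarrow> nat \<Rightarrow> ptree list \<Rightarrow> ('b \<Rightarrow>\<^sub>0 'k) \<Rightarrow> ('b \<Rightarrow>\<^sub>0 'k)" where
  "genWn A 0 w Z = Z"
| "genWn A (Suc n) w Z = (case w of [] \<Rightarrow> Z | a # v \<Rightarrow>
      A a (genWn A n v Z) - lin (\<lambda>v'. genWn A n v' Z) (triD a (sg v 1)))"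

lemma triWn_gen: "triWn n w Z = genWn triD n w Z"
  by (induction n arbitrary: w Z) (auto split: list.splits)

lemma rhoWn_gen: "rhoWn n w Z = genWn rho1 n w Z"
  by (induction n arbitrary: w Z) (auto split: list.splits)

definition Op :: "(ptree \<Rightarrow> ('b \<Rightarrow>\<^sub>0 'k::field) \<Rightarrow> ('b \<Rightarrow>\<^sub>0 'k)) \<Rightarrow> 'k TPT \<Rightarrow> ('b \<Rightarrow>\<^sub>0 'k) \<Rightarrow> ('b \<Rightarrow>\<^sub>0 'k)" where
  "Op A x Z = lin (\<lambda>w. genWn A (length w) w Z) x"

lemma triW_Op: "lin (\<lambda>w. triW w Z) x = Op triD x Z"
  by (simp add: triW_def Op_def triWn_gen)

lemma rhoW_Op: "lin (\<lambda>w. rhoW w Z) x = Op rho1 x Z"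
  by (simp add: rhoW_def Op_def rhoWn_gen)

lemma triW_Op1: "triW w Z = Op triD (sg w 1) Z"
  by (simp add: triW_def Op_def triWn_gen)

lemma rhoW_Op1: "rhoW w Z = Op rho1 (sg w 1) Z"
  by (simp add: rhoW_def Op_def rhoWn_gen)

locale act =
  fixes A :: "ptree \<Rightarrow> ('b \<Rightarrow>\<^sub>0 'k::field) \<Rightarrow> ('b \<Rightarrow>\<^sub>0 'k)"
  assumes A_lin: "lmap (A a)"
begin

lemma genWn_lin: "lmap (genWn A n w)"
proof (induction n arbitrary: w)
  case 0 then show ?case by (simp add: lmap_def)
next
  case (Suc n)
  show ?case
  proof (cases w)
    case Nil then show ?thesis by (simp add: lmap_def)
  next
    case (Cons a v)
    have l1: "lmap (\<lambda>Z. A a (genWn A n v Z))" by (rule lmap_comp[OF A_lin Suc.IH])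
    have l2: "lmap (\<lambda>Z. lin (\<lambda>v'. genWn A n v' Z) (triD a (sg v 1)))"
      by (rule lmap_lin_param) (rule Suc.IH)
    have "lmap (\<lambda>Z. A a (genWn A n v Z) - lin (\<lambda>v'. genWn A n v' Z) (triD a (sg v 1)))"
      by (rule lmap_minus[OF l1 l2])
    then show ?thesis using Cons by simp
  qed
qed

lemma Op_lin1 [intro, simp]: "lmap (\<lambda>x. Op A x Z)"
  by (simp add: Op_def)

lemma Op_lin2 [intro, simp]: "lmap (Op A x)"
  unfolding Op_def[abs_def] by (intro lmap_lin_param genWn_lin)

lemma Op_single: "Op A (sg w 1) Z = genWn A (length w) w Z"
  by (simp add: Op_def)

lemma Op_one: "Op A 1 Z = Z"
  using Op_single[of "[]" Z] by (simp add: sg_nil_one)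

lemma Op_zero: "Op A 0 Z = 0"
  by (simp add: Op_def)

lemma Op_letter1: "Op A (sg [a] 1) Z = A a Z"
  by (simp add: Op_single triD_single)

lemma Op_cons: "Op A (sg (a # v) 1) Z = A a (Op A (sg v 1) Z) - Op A (triD a (sg v 1)) Z"
proof -
  have "Op A (sg (a # v) 1) Z = A a (genWn A (length v) v Z) - lin (\<lambda>v'. genWn A (length v) v' Z) (triD a (sg v 1))"
    by (simp add: Op_single)
  also have "lin (\<lambda>v'. genWn A (length v) v' Z) (triD a (sg v 1)) = Op A (triD a (sg v 1)) Z"
    unfolding Op_def
  proof (rule lin_cong)
    fix v' assume "v' \<in> ks (triD a (sg v (1::'k)))"
    moreover have "triD a (sg v (1::'k)) \<in> Hom (length v)" by (rule triD_Hom) (simp add: Hom_sg)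
    ultimately have "length v' = length v" by (simp add: Hom_def)
    then show "genWn A (length v) v' Z = genWn A (length v') v' Z" by simp
  qed
  finally show ?thesis by (simp add: Op_single)
qed

lemma Op_letter: "Op A (sg [a] 1 * z) Z = A a (Op A z Z) - Op A (triD a z) Z"
proof -
  have "(\<lambda>z. Op A (sg [a] 1 * z) Z) = (\<lambda>z. A a (Op A z Z) - Op A (triD a z) Z)"
  proof (rule lin_ext)
    show "lmap (\<lambda>z. Op A (sg [a] 1 * z) Z)" by (rule lmap_comp[OF Op_lin1 lmap_multr])
    show "lmap (\<lambda>z. A a (Op A z Z) - Op A (triD a z) Z)"
      by (rule lmap_minus[OF lmap_comp[OF A_lin Op_lin1] lmap_comp[OF Op_lin1 lmap_triD]])
    fix v show "Op A (sg [a] 1 * sg v 1) Z = A a (Op A (sg v 1) Z) - Op A (triD a (sg v 1)) Z"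
      by (simp add: sg_word_mult Op_cons)
  qed
  then show ?thesis by metis
qed

end

interpretation W: act triD
  by standard simp



abbreviation lt :: "ptree \<Rightarrow> 'k::field TPT" where "lt a \<equiv> sg [a] 1"

definition KP :: "(ptree \<Rightarrow> ('b \<Rightarrow>\<^sub>0 'k::field) \<Rightarrow> ('b \<Rightarrow>\<^sub>0 'k)) \<Rightarrow> 'k TPT \<Rightarrow> bool" where
  "KP A y \<longleftrightarrow> (\<forall>z Z. Op A (y * z) Z = Op A y (Op A z Z) - Op A (Op triD y z) Z)"

lemma KPD: "KP A y \<Longrightarrow> Op A (y * z) Z = Op A y (Op A z Z) - Op A (Op triD y z) Z"
  by (simp add: KP_def)

context act
begin

lemma Op_br:
  assumes "KP A y"
  shows "Op A (lt a * y - y * lt a) Q = A a (Op A y Q) - Op A y (A a Q) - Op A (triD a y) Q + Op A (Op triD y (lt a)) Q"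
proof -
  have "Op A (lt a * y - y * lt a) Q = Op A (lt a * y) Q - Op A (y * lt a) Q"
    by (rule lmap_diff[OF Op_lin1])
  also have "Op A (lt a * y) Q = A a (Op A y Q) - Op A (triD a y) Q"
    by (rule Op_letter)
  also have "Op A (y * lt a) Q = Op A y (A a Q) - Op A (Op triD y (lt a)) Q"
    using KPD[OF assms, of "lt a" Q] by (simp add: Op_letter1)
  finally show ?thesis by simp
qed

lemma K_step:
  assumes KWy: "KP triD y" and KAy: "KP A y" and KAdy: "KP A (triD a y)"
    and KAe: "KP A (Op triD y (lt a))" and Dy: "der (Op triD y)"
  shows "KP A (lt a * y - y * lt a)"
  unfolding KP_def
proof (intro allI)
  fix z Z
  let ?O = "Op A" and ?Wd = "Op triD" and ?d = "triD a" and ?\<alpha> = "lt a :: 'k TPT"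
  define e where "e = ?Wd y ?\<alpha>"
  note L = lmap_add[OF Op_lin1] lmap_diff[OF Op_lin1] lmap_add[OF Op_lin2] lmap_diff[OF Op_lin2]
     lmap_add[OF A_lin] lmap_diff[OF A_lin]
  have 1: "?O ((?\<alpha> * y - y * ?\<alpha>) * z) Z = ?O (?\<alpha> * (y * z)) Z - ?O (y * (?\<alpha> * z)) Z"
    by (simp add: left_diff_distrib mult.assoc L)
  have 4: "?d (y * z) = ?d y * z + y * ?d z" by (rule derD[OF der_triD])
  have 2: "?O (?\<alpha> * (y * z)) Z = A a (?O y (?O z Z)) - A a (?O (?Wd y z) Z)
      - ?O (?d y) (?O z Z) + ?O (?Wd (?d y) z) Z - ?O y (?O (?d z) Z) + ?O (?Wd y (?d z)) Z"
    by (simp add: Op_letter KPD[OF KAy] KPD[OF KAdy] 4 L)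
  have 9: "?Wd y (?\<alpha> * z) = e * z + ?\<alpha> * ?Wd y z" unfolding e_def by (rule derD[OF Dy])
  have 7: "?O (y * (?\<alpha> * z)) Z = ?O y (A a (?O z Z)) - ?O y (?O (?d z) Z) - ?O e (?O z Z)
      + ?O (?Wd e z) Z - A a (?O (?Wd y z) Z) + ?O (?d (?Wd y z)) Z"
    by (simp add: Op_letter KPD[OF KAy] KPD[OF KAe[folded e_def]] 9 L)
  have 12: "?O (?\<alpha> * y - y * ?\<alpha>) (?O z Z) = A a (?O y (?O z Z)) - ?O y (A a (?O z Z)) - ?O (?d y) (?O z Z) + ?O e (?O z Z)"
    unfolding e_def by (simp add: Op_br[OF KAy])
  have 13: "?Wd (?\<alpha> * y - y * ?\<alpha>) z = ?d (?Wd y z) - ?Wd y (?d z) - ?Wd (?d y) z + ?Wd e z"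
    unfolding e_def by (simp add: W.Op_br[OF KWy])
  show "?O ((?\<alpha> * y - y * ?\<alpha>) * z) Z = ?O (?\<alpha> * y - y * ?\<alpha>) (?O z Z) - ?O (?Wd (?\<alpha> * y - y * ?\<alpha>) z) Z"
    unfolding 1 2 7 12 13 by (simp add: L algebra_simps)
qed

lemma KP_Hom1:
  assumes "x \<in> Hom 1"
  shows "KP A x"
  unfolding KP_def
proof (intro allI)
  fix z Z
  show "Op A (x * z) Z = Op A x (Op A z Z) - Op A (Op triD x z) Z"
  proof (rule lin_eq_keys[where f = "\<lambda>x. Op A (x * z) Z" and g = "\<lambda>x. Op A x (Op A z Z) - Op A (Op triD x z) Z"])
    show "lmap (\<lambda>x. Op A (x * z) Z)" by (rule lmap_comp[OF Op_lin1 lmap_multl])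
    show "lmap (\<lambda>x. Op A x (Op A z Z) - Op A (Op triD x z) Z)"
      by (rule lmap_minus[OF Op_lin1 lmap_comp[OF Op_lin1 W.Op_lin1]])
    fix w assume "w \<in> ks x"
    then have "length w = 1" using assms by (simp add: Hom_def)
    then obtain t where w: "w = [t]" by (metis One_nat_def length_0_conv length_Suc_conv)
    show "Op A (sg w 1 * z) Z = Op A (sg w 1) (Op A z Z) - Op A (Op triD (sg w 1) z) Z"
      by (simp add: w Op_letter Op_letter1 W.Op_letter1)
  qed
qed

lemma KP_zero: "KP A 0"
  by (simp add: KP_def Op_zero W.Op_zero lmap_zero[OF Op_lin2])

lemma KP_add: "KP A x \<Longrightarrow> KP A y \<Longrightarrow> KP A (x + y)"
  by (simp add: KP_def distrib_right lmap_add[OF Op_lin1] lmap_add[OF W.Op_lin1])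

lemma KP_smul: "KP A x \<Longrightarrow> KP A (smul c x)"
  by (simp add: KP_def smul_mult_left lmap_smul[OF Op_lin1] lmap_smul[OF W.Op_lin1] smul_diff)

lemma Op_fun_add: "Op A (x + y) = (\<lambda>Z. Op A x Z + Op A y Z)"
  by (rule ext) (simp add: lmap_add[OF Op_lin1])

lemma Op_fun_smul: "Op A (smul c x) = (\<lambda>Z. smul c (Op A x Z))"
  by (rule ext) (simp add: lmap_smul[OF Op_lin1])

lemma Op_fun_zero: "Op A 0 = (\<lambda>Z. 0)"
  by (rule ext) (simp add: Op_zero)

end

lemma W_Hom1: "x \<in> Hom 1 \<Longrightarrow> Op triD x = (\<lambda>Z. lin (\<lambda>w. triD (hd w) Z) x)"
proof (rule ext)
  fix Z assume x: "x \<in> Hom 1"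
  show "Op triD x Z = lin (\<lambda>w. triD (hd w) Z) x"
    unfolding Op_def
  proof (rule lin_cong)
    fix w assume "w \<in> ks x"
    then have "length w = 1" using x by (simp add: Hom_def)
    then obtain t where w: "w = [t]" by (metis One_nat_def length_0_conv length_Suc_conv)
    show "genWn triD (length w) w Z = triD (hd w) Z"
      using W.Op_letter1[of t Z] by (simp add: w W.Op_single)
  qed
qed

lemma der_W_Hom1: "x \<in> Hom 1 \<Longrightarrow> der (Op triD x)"
  by (simp add: W_Hom1 der_lin der_triD)

lemma genWn_Hom: "Z \<in> Hom k \<Longrightarrow> genWn triD n w Z \<in> Hom k"
proof (induction n arbitrary: w)
  case 0 then show ?case by simp
next
  case (Suc n)
  then show ?case
    by (cases w) (auto intro!: Hom_diff triD_Hom Hom_lin)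
qed

lemma W_Hom: "Z \<in> Hom k \<Longrightarrow> Op triD x Z \<in> Hom k"
  unfolding Op_def by (intro Hom_lin genWn_Hom)

section \<open>Lie elements\<close>

lemma LiePT_diff: "x \<in> LiePT \<Longrightarrow> y \<in> LiePT \<Longrightarrow> x - y \<in> LiePT"
  using LiePT.add[of x "smul (-1) y"] LiePT.smul[of y "-1"] by (simp add: smul_neg1)

lemma LiePT_sum: "(\<And>i. i \<in> I \<Longrightarrow> g i \<in> LiePT) \<Longrightarrow> sum g I \<in> LiePT"
  by (induction I rule: infinite_finite_induct) (auto intro: LiePT.zero LiePT.add)

lemma LiePT_lin: "(\<And>a. a \<in> ks x \<Longrightarrow> f a \<in> LiePT) \<Longrightarrow> lin f x \<in> LiePT"
  unfolding lin_def by (intro LiePT_sum LiePT.smul) auto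

lemma LiePT_comm: "x \<in> LiePT \<Longrightarrow> y \<in> LiePT \<Longrightarrow> x * y - y * x \<in> LiePT"
  using LiePT.comm[of x y] by (simp add: commT_eq)

lemma Hom1_word: "x \<in> Hom 1 \<Longrightarrow> w \<in> ks x \<Longrightarrow> \<exists>t. w = [t]"
  by (auto simp: Hom_def) (metis One_nat_def length_0_conv length_Suc_conv)

lemma Hom1_LiePT: "x \<in> Hom 1 \<Longrightarrow> x \<in> LiePT"
  apply (subst lin_expand)
  apply (rule LiePT_lin)
  using Hom1_word LiePT.gen by blast

lemma triD_LiePT: "x \<in> LiePT \<Longrightarrow> triD a x \<in> LiePT"
proof (induction rule: LiePT.induct)
  case (gen t)
  then show ?case by (intro Hom1_LiePT triD_Hom Hom_sg) simp
next
  case zero then show ?case by (simp add: lmap_zero LiePT.zero)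
next
  case (add x y) then show ?case by (simp add: lmap_add LiePT.add)
next
  case (smul x c) then show ?case by (simp add: lmap_smul LiePT.smul)
next
  case (comm x y)
  have "triD a (commT x y) = (triD a x * y - y * triD a x) + (x * triD a y - triD a y * x)"
    by (simp add: commT_eq lmap_diff derD[OF der_triD] algebra_simps)
  then show ?case using comm by (simp add: LiePT.add LiePT_comm)
qed

lemma W_Hom1_LiePT: "x \<in> Hom 1 \<Longrightarrow> Z \<in> LiePT \<Longrightarrow> Op triD x Z \<in> LiePT"
  by (simp add: W_Hom1 LiePT_lin triD_LiePT)

inductive Lp :: "nat \<Rightarrow> 'k::field TPT \<Rightarrow> bool" where
  Lgen: "Lp (Suc 0) (sg [t] 1)"
| Lbr: "Lp n y \<Longrightarrow> Lp (Suc n) (sg [a] 1 * y - y * sg [a] 1)"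
| Lzero: "Lp n 0"
| Ladd: "Lp n x \<Longrightarrow> Lp n y \<Longrightarrow> Lp n (x + y)"
| Lsmul: "Lp n x \<Longrightarrow> Lp n (smul c x)"

lemma Lp_Hom: "Lp n y \<Longrightarrow> y \<in> Hom n"
proof (induction rule: Lp.induct)
  case (Lbr n y a)
  have "lt a * y \<in> Hom (1 + n)" by (rule Hom_mult[OF Hom_sg Lbr.IH]) simp
  moreover have "y * lt a \<in> Hom (n + 1)" by (rule Hom_mult[OF Lbr.IH Hom_sg]) simp
  ultimately show ?case by (auto intro: Hom_diff)
qed (auto intro: Hom_sg Hom_add Hom_smul)

lemma Lp_diff: "Lp n x \<Longrightarrow> Lp n y \<Longrightarrow> Lp n (x - y)"
  using Ladd[of n x "smul (-1) y"] Lsmul[of n y "-1"] by (simp add: smul_neg1)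

lemma Lp_sum: "(\<And>i. i \<in> I \<Longrightarrow> Lp n (g i)) \<Longrightarrow> Lp n (sum g I)"
  by (induction I rule: infinite_finite_induct) (auto intro: Lzero Ladd)

lemma Lp_lin: "(\<And>a. a \<in> ks x \<Longrightarrow> Lp n (f a)) \<Longrightarrow> Lp n (lin f x)"
  unfolding lin_def by (intro Lp_sum Lsmul) auto

lemma Hom1_Lp: "x \<in> Hom 1 \<Longrightarrow> Lp 1 x"
  apply (subst lin_expand)
  apply (rule Lp_lin)
  using Hom1_word Lgen by fastforce

lemma Lp_br_Hom1:
  assumes c: "c \<in> Hom 1" and y: "Lp n y"
  shows "Lp (Suc n) (c * y - y * c)"
proof -
  have "c * y - y * c = lin (\<lambda>w. sg w 1 * y - y * sg w 1) c"
    by (rule lin_unique) (rule lmap_minus[OF lmap_multl lmap_multr])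
  also have "Lp (Suc n) \<dots>"
    by (rule Lp_lin) (use Hom1_word[OF c] y Lbr in blast)
  finally show ?thesis .
qed

lemma Lp_triD: "Lp n y \<Longrightarrow> Lp n (triD a y)"
proof (induction rule: Lp.induct)
  case (Lgen t)
  have "triD a (lt t) \<in> Hom 1" by (intro triD_Hom Hom_sg) simp
  then show ?case using Hom1_Lp by simp
next
  case (Lbr n y b)
  have "triD a (lt b * y - y * lt b) = (triD a (lt b) * y - y * triD a (lt b)) + (lt b * triD a y - triD a y * lt b)"
    by (simp add: lmap_diff derD[OF der_triD] algebra_simps)
  moreover have "triD a (lt b) \<in> Hom 1" by (intro triD_Hom Hom_sg) simp
  ultimately show ?case using Lbr by (auto intro!: Ladd Lp_br_Hom1 Lp.Lbr)
next
  case (Lzero n) then show ?case by (simp add: lmap_zero Lp.Lzero)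
next
  case (Ladd n x y) then show ?case by (simp add: lmap_add Lp.Ladd)
next
  case (Lsmul n x c) then show ?case by (simp add: lmap_smul Lp.Lsmul)
qed

lemma Lp_LiePT: "Lp n y \<Longrightarrow> y \<in> LiePT"
  by (induction rule: Lp.induct) (auto intro: LiePT.intros LiePT_comm)

lemma Lp_bracket: "Lp m y \<Longrightarrow> Lp n z \<Longrightarrow> Lp (m + n) (y * z - z * y)"
proof (induction arbitrary: n z rule: Lp.induct)
  case (Lgen t)
  then show ?case using Lbr[of n z t] by simp
next
  case (Lbr m y a)
  have j: "(lt a * y - y * lt a) * z - z * (lt a * y - y * lt a)
        = (lt a * (y * z - z * y) - (y * z - z * y) * lt a) - (y * (lt a * z - z * lt a) - (lt a * z - z * lt a) * y)"
    by (simp add: algebra_simps)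
  have "Lp (Suc (m + n)) (lt a * (y * z - z * y) - (y * z - z * y) * lt a)"
    using Lbr by (intro Lp.Lbr) simp
  moreover have "Lp (m + Suc n) (y * (lt a * z - z * lt a) - (lt a * z - z * lt a) * y)"
    using Lbr by (intro Lbr.IH Lp.Lbr) simp
  ultimately show ?case unfolding j by (auto intro: Lp_diff)
next
  case (Lzero m) then show ?case by (simp add: Lp.Lzero)
next
  case (Ladd m x y)
  have "(x + y) * z - z * (x + y) = (x * z - z * x) + (y * z - z * y)" by (simp add: algebra_simps)
  then show ?case using Ladd by (simp add: Lp.Ladd)
next
  case (Lsmul m x c)
  have "smul c x * z - z * smul c x = smul c (x * z - z * x)" by (simp add: smul_mult_left smul_mult_right smul_diff)
  then show ?case using Lsmul by (simp add: Lp.Lsmul)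
qed

inductive LL :: "'k::field TPT \<Rightarrow> bool" where
  LLp: "Lp n y \<Longrightarrow> LL y"
| LLadd: "LL x \<Longrightarrow> LL y \<Longrightarrow> LL (x + y)"

lemma LL_smul: "LL x \<Longrightarrow> LL (smul c x)"
  by (induction rule: LL.induct) (auto simp: smul_add intro: LL.intros Lsmul)

lemma LL_bracket1: assumes "LL z" "Lp m y" shows "LL (y * z - z * y)"
  using assms
proof (induction z rule: LL.induct)
  case (LLp n z) then show ?case using Lp_bracket LL.LLp by blast
next
  case (LLadd x z)
  have "y * (x + z) - (x + z) * y = (y * x - x * y) + (y * z - z * y)" by (simp add: algebra_simps)
  then show ?case using LLadd by (simp add: LL.LLadd)
qed

lemma LL_bracket: "LL y \<Longrightarrow> LL z \<Longrightarrow> LL (y * z - z * y)"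
proof (induction y rule: LL.induct)
  case (LLp n y) then show ?case using LL_bracket1 by blast
next
  case (LLadd x y)
  have "(x + y) * z - z * (x + y) = (x * z - z * x) + (y * z - z * y)" by (simp add: algebra_simps)
  then show ?case using LLadd by (simp add: LL.LLadd)
qed

lemma LiePT_LL: "x \<in> LiePT \<Longrightarrow> LL x"
proof (induction rule: LiePT.induct)
  case (gen t) then show ?case using Lgen LLp by blast
next
  case zero then show ?case using Lzero[of 0] LLp by blast
next
  case (add x y) then show ?case by (blast intro: LLadd)
next
  case (smul x c) then show ?case by (blast intro: LL_smul)
next
  case (comm x y) then show ?case by (simp add: commT_eq LL_bracket)
qed

lemma LL_induct_prop:
  assumes "LL x" "\<And>n y. Lp n y \<Longrightarrow> P y" "\<And>x y. P x \<Longrightarrow> P y \<Longrightarrow> P (x + y)"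
  shows "P x"
  using assms by (induction rule: LL.induct) auto



context act
begin

lemma Op_Hom1: "x \<in> Hom 1 \<Longrightarrow> Op A x = (\<lambda>Z. lin (\<lambda>w. A (hd w) Z) x)"
proof (rule ext)
  fix Z assume x: "x \<in> Hom 1"
  show "Op A x Z = lin (\<lambda>w. A (hd w) Z) x"
    unfolding Op_def
  proof (rule lin_cong)
    fix w assume "w \<in> ks x"
    then obtain t where w: "w = [t]" using Hom1_word[OF x] by blast
    show "genWn A (length w) w Z = A (hd w) Z"
      using Op_letter1[of t Z] by (simp add: w Op_single)
  qed
qed

lemma Op_br_fun:
  assumes "KP A y"
  shows "Op A (lt a * y - y * lt a) = (\<lambda>Q. A a (Op A y Q) - Op A y (A a Q) - Op A (triD a y) Q + Op A (Op triD y (lt a)) Q)"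
  by (rule ext) (rule Op_br[OF assms])

end

definition PW :: "'k::field TPT \<Rightarrow> bool" where
  "PW y \<longleftrightarrow> KP triD y \<and> der (Op triD y) \<and> (\<forall>Z\<in>LiePT. Op triD y Z \<in> LiePT)"

lemma PW_Hom1: "x \<in> Hom 1 \<Longrightarrow> PW x"
  by (simp add: PW_def W.KP_Hom1 der_W_Hom1 W_Hom1_LiePT)

lemma PW_zero: "PW 0"
  by (simp add: PW_def W.KP_zero W.Op_fun_zero der_zero LiePT.zero)

lemma PW_add: "PW x \<Longrightarrow> PW y \<Longrightarrow> PW (x + y)"
  by (simp add: PW_def W.KP_add W.Op_fun_add der_plus LiePT.add)

lemma PW_smul: "PW x \<Longrightarrow> PW (smul c x)"
  by (simp add: PW_def W.KP_smul W.Op_fun_smul der_smul LiePT.smul)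

lemma PW_br:
  assumes y: "PW y" and dy: "PW (triD a y)" and e: "PW (Op triD y (lt a))"
  shows "PW (lt a * y - y * lt a)"
proof -
  have K: "KP triD y" "KP triD (triD a y)" "KP triD (Op triD y (lt a))"
    and D: "der (Op triD y)" "der (Op triD (triD a y))" "der (Op triD (Op triD y (lt a)))"
    and P: "\<And>Z. Z \<in> LiePT \<Longrightarrow> Op triD y Z \<in> LiePT"
      "\<And>Z. Z \<in> LiePT \<Longrightarrow> Op triD (triD a y) Z \<in> LiePT"
      "\<And>Z. Z \<in> LiePT \<Longrightarrow> Op triD (Op triD y (lt a)) Z \<in> LiePT"
    using y dy e by (auto simp: PW_def)
  have "KP triD (lt a * y - y * lt a)"
    by (rule W.K_step[OF K(1) K(1) K(2) K(3) D(1)])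
  moreover have "der (Op triD (lt a * y - y * lt a))"
    unfolding W.Op_br_fun[OF K(1)]
    by (rule der_plus[OF der_minus[OF der_comm[OF der_triD D(1)] D(2)] D(3)])
  moreover have "\<forall>Z\<in>LiePT. Op triD (lt a * y - y * lt a) Z \<in> LiePT"
    unfolding W.Op_br_fun[OF K(1)]
    by (auto intro!: LiePT.add LiePT_diff triD_LiePT P)
  ultimately show ?thesis by (simp add: PW_def)
qed

lemma PW_step: fixes y :: "'k::field TPT"
  shows "Lp n y \<Longrightarrow> (\<forall>m<n. \<forall>y::'k TPT. Lp m y \<longrightarrow> PW y) \<Longrightarrow> PW y"
proof (induction rule: Lp.induct)
  case (Lgen t) show ?case by (rule PW_Hom1, rule Hom_sg) simp
next
  case (Lbr n y a)
  have 1: "PW y" using spec[OF Lbr.prems, of n] Lbr.hyps by simp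
  have 2: "PW (triD a y)" using spec[OF Lbr.prems, of n] Lp_triD[OF Lbr.hyps] by simp
  have 3: "Op triD y (lt a) \<in> Hom 1" by (intro W_Hom Hom_sg) simp
  show ?case by (rule PW_br[OF 1 2 PW_Hom1[OF 3]])
next
  case (Lzero n) show ?case by (rule PW_zero)
next
  case (Ladd n x y) then show ?case by (simp add: PW_add)
next
  case (Lsmul n x c) then show ?case by (simp add: PW_smul)
qed

lemma PW_Lp: "Lp n y \<Longrightarrow> PW y"
proof (induction n arbitrary: y rule: less_induct)
  case (less n) then show ?case using PW_step by blast
qed

lemma PW_LiePT: "y \<in> LiePT \<Longrightarrow> PW y"
proof -
  assume "y \<in> LiePT"
  then have "LL y" by (rule LiePT_LL)
  then show "PW y" by (rule LL_induct_prop) (auto intro: PW_Lp PW_add)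
qed

locale dact = act A for A :: "ptree \<Rightarrow> ('b::monoid_add \<Rightarrow>\<^sub>0 'k::field) \<Rightarrow> ('b \<Rightarrow>\<^sub>0 'k)" +
  assumes A_der: "der (A a)"
begin

definition PR :: "'k TPT \<Rightarrow> bool" where
  "PR y \<longleftrightarrow> KP A y \<and> der (Op A y)"

lemma PR_Hom1: "x \<in> Hom 1 \<Longrightarrow> PR x"
  by (simp add: PR_def KP_Hom1 Op_Hom1 der_lin A_der)

lemma PR_zero: "PR 0"
  by (simp add: PR_def KP_zero Op_fun_zero der_zero)

lemma PR_add: "PR x \<Longrightarrow> PR y \<Longrightarrow> PR (x + y)"
  by (simp add: PR_def KP_add Op_fun_add der_plus)

lemma PR_smul: "PR x \<Longrightarrow> PR (smul c x)"
  by (simp add: PR_def KP_smul Op_fun_smul der_smul)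

lemma PR_br:
  assumes w: "PW y" and y: "PR y" and dy: "PR (triD a y)" and e: "PR (Op triD y (lt a))"
  shows "PR (lt a * y - y * lt a)"
proof -
  have KW: "KP triD y" and DW: "der (Op triD y)" using w by (auto simp: PW_def)
  have K: "KP A y" "KP A (triD a y)" "KP A (Op triD y (lt a))"
    and D: "der (Op A y)" "der (Op A (triD a y))" "der (Op A (Op triD y (lt a)))"
    using y dy e by (auto simp: PR_def)
  have "KP A (lt a * y - y * lt a)"
    by (rule K_step[OF KW K(1) K(2) K(3) DW])
  moreover have "der (Op A (lt a * y - y * lt a))"
    unfolding Op_br_fun[OF K(1)]
    by (rule der_plus[OF der_minus[OF der_comm[OF A_der D(1)] D(2)] D(3)])
  ultimately show ?thesis by (simp add: PR_def)
qed

lemma PR_step: fixes y :: "'k TPT"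
  shows "Lp n y \<Longrightarrow> (\<forall>m<n. \<forall>y::'k TPT. Lp m y \<longrightarrow> PR y) \<Longrightarrow> PR y"
proof (induction rule: Lp.induct)
  case (Lgen t) show ?case by (rule PR_Hom1, rule Hom_sg) simp
next
  case (Lbr n y a)
  have 1: "PR y" using spec[OF Lbr.prems, of n] Lbr.hyps by simp
  have 2: "PR (triD a y)" using spec[OF Lbr.prems, of n] Lp_triD[OF Lbr.hyps] by simp
  have 3: "Op triD y (lt a) \<in> Hom 1" by (intro W_Hom Hom_sg) simp
  have 4: "PW y" by (rule PW_Lp[OF Lbr.hyps])
  show ?case by (rule PR_br[OF 4 1 2 PR_Hom1[OF 3]])
next
  case (Lzero n) show ?case by (rule PR_zero)
next
  case (Ladd n x y) then show ?case by (simp add: PR_add)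
next
  case (Lsmul n x c) then show ?case by (simp add: PR_smul)
qed

lemma PR_Lp: "Lp n y \<Longrightarrow> PR y"
proof (induction n arbitrary: y rule: less_induct)
  case (less n) then show ?case using PR_step by blast
qed

lemma PR_LiePT: "y \<in> LiePT \<Longrightarrow> PR y"
proof -
  assume "y \<in> LiePT"
  then have "LL y" by (rule LiePT_LL)
  then show "PR y" by (rule LL_induct_prop) (auto intro: PR_Lp PR_add)
qed

end



definition hA :: "ptree \<Rightarrow> aroma \<Rightarrow> 'k::field SPA" where
  "hA t a = sum_list (map (\<lambda>a'. sg {#a'#} 1) (graft_aroma t a))"

definition FA :: "ptree \<Rightarrow> aroma multiset \<Rightarrow> 'k::field SPA" where
  "FA t \<alpha> = (\<Sum>a \<in># \<alpha>. sg (\<alpha> - {#a#}) 1 * hA t a)"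

lemma rho1_single: "rho1 t (sg \<alpha> 1) = (FA t \<alpha> :: 'k::field SPA)"
proof -
  have "rho1 t (sg \<alpha> (1::'k)) = (\<Sum>a \<in># \<alpha>. sum_list (map (\<lambda>a'. sg (\<alpha> - {#a#} + {#a'#}) (1::'k)) (graft_aroma t a)))"
    by (simp add: rho1_def)
  also have "\<dots> = FA t \<alpha>"
    unfolding FA_def hA_def
    by (simp add: mult_single sum_list_map_mult_left[symmetric] o_def)
  finally show ?thesis .
qed

lemma FA_add: "FA t (\<alpha> + \<beta>) = FA t \<alpha> * sg \<beta> 1 + sg \<alpha> 1 * (FA t \<beta> :: 'k::field SPA)"
proof -
  have 1: "(\<Sum>a \<in># \<alpha>. sg (\<alpha> + \<beta> - {#a#}) 1 * hA t a) = (\<Sum>a \<in># \<alpha>. sg (\<alpha> - {#a#}) 1 * hA t a) * (sg \<beta> 1 :: 'k SPA)"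
  proof -
    have "(\<Sum>a \<in># \<alpha>. sg (\<alpha> + \<beta> - {#a#}) 1 * hA t a) = (\<Sum>a \<in># \<alpha>. sg (\<alpha> - {#a#}) 1 * hA t a * (sg \<beta> 1 :: 'k SPA))"
    proof (rule arg_cong[where f = sum_mset], rule image_mset_cong)
      fix a assume "a \<in># \<alpha>"
      then have eq: "\<alpha> + \<beta> - {#a#} = (\<alpha> - {#a#}) + \<beta>"
        by (metis add.commute diff_union_single_conv)
      have e2: "sg ((\<alpha> - {#a#}) + \<beta>) (1::'k) = sg (\<alpha> - {#a#}) 1 * sg \<beta> 1"
        by (simp add: mult_single)
      show "sg (\<alpha> + \<beta> - {#a#}) 1 * hA t a = sg (\<alpha> - {#a#}) 1 * hA t a * (sg \<beta> 1 :: 'k SPA)"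
        by (simp only: eq e2) (simp add: ac_simps)
    qed
    then show ?thesis by (simp add: sum_mset_distrib_right)
  qed
  have 2: "(\<Sum>a \<in># \<beta>. sg (\<alpha> + \<beta> - {#a#}) 1 * hA t a) = (sg \<alpha> 1 :: 'k SPA) * (\<Sum>a \<in># \<beta>. sg (\<beta> - {#a#}) 1 * hA t a)"
  proof -
    have "(\<Sum>a \<in># \<beta>. sg (\<alpha> + \<beta> - {#a#}) 1 * hA t a) = (\<Sum>a \<in># \<beta>. (sg \<alpha> 1 :: 'k SPA) * (sg (\<beta> - {#a#}) 1 * hA t a))"
    proof (rule arg_cong[where f = sum_mset], rule image_mset_cong)
      fix a assume "a \<in># \<beta>"
      then have eq: "\<alpha> + \<beta> - {#a#} = \<alpha> + (\<beta> - {#a#})"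
        by (rule diff_union_single_conv)
      have e2: "sg (\<alpha> + (\<beta> - {#a#})) (1::'k) = sg \<alpha> 1 * sg (\<beta> - {#a#}) 1"
        by (simp add: mult_single)
      show "sg (\<alpha> + \<beta> - {#a#}) 1 * hA t a = (sg \<alpha> 1 :: 'k SPA) * (sg (\<beta> - {#a#}) 1 * hA t a)"
        by (simp only: eq e2) (simp add: ac_simps)
    qed
    then show ?thesis by (simp add: sum_mset_distrib_left)
  qed
  show ?thesis unfolding FA_def using 1 2 by simp
qed

lemma der_rho1: "der (rho1 t :: 'k::field SPA \<Rightarrow> 'k SPA)"
proof (rule der_by_basis)
  show "lmap (rho1 t :: 'k SPA \<Rightarrow> 'k SPA)" by (simp add: rho1_def)
  fix u v
  show "rho1 t (sg u 1 * sg v 1) = rho1 t (sg u 1) * sg v 1 + sg u 1 * (rho1 t (sg v 1) :: 'k SPA)"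
    by (simp add: mult_single rho1_single FA_add)
qed

interpretation R: dact rho1
  by standard (rule der_lmap[OF der_rho1], rule der_rho1)



lemma lmap_tens1 [intro, simp]: "lmap (\<lambda>\<alpha>. tens \<alpha> x)"
  by (simp add: tens_def)

lemma lmap_tens2 [intro, simp]: "lmap (tens \<alpha>)"
  unfolding tens_def by (rule lmap_bilin2)

lemma tens_single: "tens (sg m 1) (sg w 1) = (sg (m, w) 1 :: 'k::field ATPT)"
  by (simp add: tens_def)

lemma tens_add1: "tens (a + b) x = tens a x + tens b x"
  by (rule lmap_add[OF lmap_tens1])
lemma tens_add2: "tens a (x + y) = tens a x + tens a y"
  by (rule lmap_add[OF lmap_tens2])
lemma tens_diff1: "tens (a - b) x = tens a x - tens b x"
  by (rule lmap_diff[OF lmap_tens1])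
lemma tens_diff2: "tens a (x - y) = tens a x - tens a y"
  by (rule lmap_diff[OF lmap_tens2])
lemma tens_zero1 [simp]: "tens 0 x = 0"
  by (rule lmap_zero[OF lmap_tens1])
lemma tens_zero2 [simp]: "tens a 0 = 0"
  by (rule lmap_zero[OF lmap_tens2])

lemma tens_mult: "tens \<alpha> x * tens \<beta> y = tens (\<alpha> * \<beta>) (x * y :: 'k::field TPT)"
proof (rule bilin_ext[where F = "\<lambda>\<alpha> x. tens \<alpha> x * tens \<beta> y" and G = "\<lambda>\<alpha> x. tens (\<alpha> * \<beta>) (x * y)"])
  show "\<And>x. lmap (\<lambda>\<alpha>. tens \<alpha> x * tens \<beta> y)" by (rule lmap_comp[OF lmap_multl lmap_tens1])
  show "\<And>\<alpha>. lmap (\<lambda>x. tens \<alpha> x * tens \<beta> y)" by (rule lmap_comp[OF lmap_multl lmap_tens2])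
  show "\<And>x. lmap (\<lambda>\<alpha>. tens (\<alpha> * \<beta>) (x * y))" by (rule lmap_comp[OF lmap_tens1 lmap_multl])
  show "\<And>\<alpha>. lmap (\<lambda>x. tens (\<alpha> * \<beta>) (x * y))" by (rule lmap_comp[OF lmap_tens2 lmap_multl])
  fix m w
  show "tens (sg m 1) (sg w 1) * tens \<beta> y = tens (sg m 1 * \<beta>) (sg w 1 * y)"
  proof (rule bilin_ext[where F = "\<lambda>\<beta> y. tens (sg m 1) (sg w 1) * tens \<beta> y" and G = "\<lambda>\<beta> y. tens (sg m 1 * \<beta>) (sg w 1 * y)"])
    show "\<And>y. lmap (\<lambda>\<beta>. tens (sg m 1) (sg w 1) * tens \<beta> y)" by (rule lmap_comp[OF lmap_multr lmap_tens1])
    show "\<And>\<beta>. lmap (\<lambda>y. tens (sg m 1) (sg w 1) * tens \<beta> y)" by (rule lmap_comp[OF lmap_multr lmap_tens2])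
    show "\<And>y. lmap (\<lambda>\<beta>. tens (sg m 1 * \<beta>) (sg w 1 * y))" by (rule lmap_comp[OF lmap_tens1 lmap_multr])
    show "\<And>\<beta>. lmap (\<lambda>y. tens (sg m 1 * \<beta>) (sg w 1 * y))" by (rule lmap_comp[OF lmap_tens2 lmap_multr])
    fix m' w'
    show "tens (sg m 1) (sg w 1) * tens (sg m' 1) (sg w' 1) = tens (sg m 1 * sg m' 1) (sg w 1 * (sg w' 1 :: 'k TPT))"
      by (simp add: tens_single mult_single plus_prod_def)
  qed
qed

lemma brA_fun: "(\<lambda>(m1::aroma multiset, w1::ptree list) (m2, w2). sg (m1 + m2, w1 @ w2) (1::'k::field) - sg (m1 + m2, w2 @ w1) 1)
   = (\<lambda>a b. sg (a + b) 1 - sg (b + a) 1)" (is "?f = ?g")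
proof (intro ext)
  fix a b :: "aroma multiset \<times> ptree list"
  obtain m1 w1 where a: "a = (m1, w1)" by (cases a)
  obtain m2 w2 where b: "b = (m2, w2)" by (cases b)
  have c: "m2 + m1 = m1 + m2" by (rule add.commute)
  show "?f a b = ?g a b" by (simp add: a b plus_prod_def plus_list_def c)
qed

lemma brA_eq: "brA X Y = X * Y - Y * (X :: 'k::field ATPT)"
  unfolding brA_def brA_fun bilin_diff by (simp add: bilin_mult bilin_mult_swap)

lemma lmap_brA1 [intro, simp]: "lmap (\<lambda>X. brA X Y)"
  by (simp add: brA_def)
lemma lmap_brA2 [intro, simp]: "lmap (brA X)"
  unfolding brA_def by (rule lmap_bilin2)
lemma lmap_triA1 [intro, simp]: "lmap (\<lambda>X. triA X Y)"
  by (simp add: triA_def)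
lemma lmap_triA2 [intro, simp]: "lmap (triA X)"
  unfolding triA_def by (rule lmap_bilin2)

abbreviation Wo :: "'k::field TPT \<Rightarrow> 'k TPT \<Rightarrow> 'k TPT" where "Wo \<equiv> Op triD"
abbreviation Ro :: "'k::field TPT \<Rightarrow> 'k SPA \<Rightarrow> 'k SPA" where "Ro \<equiv> Op rho1"

lemma triA_pure: "triA (tens \<alpha> x) (tens \<beta> y) = tens (\<alpha> * Ro x \<beta>) y + tens (\<alpha> * \<beta>) (Wo x (y :: 'k::field TPT))"
proof (rule bilin_ext[where F = "\<lambda>\<alpha> x. triA (tens \<alpha> x) (tens \<beta> y)" and G = "\<lambda>\<alpha> x. tens (\<alpha> * Ro x \<beta>) y + tens (\<alpha> * \<beta>) (Wo x y)"])
  show "\<And>x. lmap (\<lambda>\<alpha>. triA (tens \<alpha> x) (tens \<beta> y))" by (rule lmap_comp[OF lmap_triA1 lmap_tens1])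
  show "\<And>\<alpha>. lmap (\<lambda>x. triA (tens \<alpha> x) (tens \<beta> y))" by (rule lmap_comp[OF lmap_triA1 lmap_tens2])
  show "\<And>x. lmap (\<lambda>\<alpha>. tens (\<alpha> * Ro x \<beta>) y + tens (\<alpha> * \<beta>) (Wo x y))"
    by (rule lmap_plus[OF lmap_comp[OF lmap_tens1 lmap_multl] lmap_comp[OF lmap_tens1 lmap_multl]])
  show "\<And>\<alpha>. lmap (\<lambda>x. tens (\<alpha> * Ro x \<beta>) y + tens (\<alpha> * \<beta>) (Wo x y))"
    by (rule lmap_plus[OF lmap_comp[OF lmap_tens1 lmap_comp[OF lmap_multr R.Op_lin1]] lmap_comp[OF lmap_tens2 W.Op_lin1]])
  fix m1 w1
  show "triA (tens (sg m1 1) (sg w1 1)) (tens \<beta> y) = tens (sg m1 1 * Ro (sg w1 1) \<beta>) y + tens (sg m1 1 * \<beta>) (Wo (sg w1 1) y)"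
  proof (rule bilin_ext[where F = "\<lambda>\<beta> y. triA (tens (sg m1 1) (sg w1 1)) (tens \<beta> y)" and G = "\<lambda>\<beta> y. tens (sg m1 1 * Ro (sg w1 1) \<beta>) y + tens (sg m1 1 * \<beta>) (Wo (sg w1 1) y)"])
    show "\<And>y. lmap (\<lambda>\<beta>. triA (tens (sg m1 1) (sg w1 1)) (tens \<beta> y))" by (rule lmap_comp[OF lmap_triA2 lmap_tens1])
    show "\<And>\<beta>. lmap (\<lambda>y. triA (tens (sg m1 1) (sg w1 1)) (tens \<beta> y))" by (rule lmap_comp[OF lmap_triA2 lmap_tens2])
    show "\<And>y. lmap (\<lambda>\<beta>. tens (sg m1 1 * Ro (sg w1 1) \<beta>) y + tens (sg m1 1 * \<beta>) (Wo (sg w1 1) y))"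
      by (rule lmap_plus[OF lmap_comp[OF lmap_tens1 lmap_comp[OF lmap_multr R.Op_lin2]] lmap_comp[OF lmap_tens1 lmap_multr]])
    show "\<And>\<beta>. lmap (\<lambda>y. tens (sg m1 1 * Ro (sg w1 1) \<beta>) y + tens (sg m1 1 * \<beta>) (Wo (sg w1 1) y))"
      by (rule lmap_plus[OF lmap_tens2 lmap_comp[OF lmap_tens2 W.Op_lin2]])
    fix m2 w2
    show "triA (tens (sg m1 1) (sg w1 1)) (tens (sg m2 1) (sg w2 1)) =
      tens (sg m1 1 * Ro (sg w1 1) (sg m2 1)) (sg w2 1) + tens (sg m1 1 * sg m2 1) (Wo (sg w1 1) (sg w2 (1::'k)))"
      by (simp add: tens_single triA_def mulS_eq rhoW_Op1 triW_Op1 mult_single)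
  qed
qed



lemma W_der: assumes "x \<in> LiePT" shows "der (Wo x)"
  using PW_LiePT[OF assms] by (simp add: PW_def)
lemma W_K: assumes "x \<in> LiePT" shows "KP triD x"
  using PW_LiePT[OF assms] by (simp add: PW_def)
lemma W_pres: assumes "x \<in> LiePT" "z \<in> LiePT" shows "Wo x z \<in> LiePT"
  using PW_LiePT[OF assms(1)] assms(2) by (simp add: PW_def)
lemma R_der: assumes "x \<in> LiePT" shows "der (Ro x)"
  using R.PR_LiePT[OF assms] by (simp add: R.PR_def)
lemma R_K: assumes "x \<in> LiePT" shows "KP rho1 x"
  using R.PR_LiePT[OF assms] by (simp add: R.PR_def)

lemmas tens_simps = tens_add1 tens_add2 tens_diff1 tens_diff2 tens_mult

lemma pure6:
  fixes x y z :: "'k::field TPT"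
  assumes x: "x \<in> LiePT"
  shows "triA (tens \<alpha> x) (brA (tens \<beta> y) (tens \<gamma> z)) =
    brA (triA (tens \<alpha> x) (tens \<beta> y)) (tens \<gamma> z) + brA (tens \<beta> y) (triA (tens \<alpha> x) (tens \<gamma> z))"
proof -
  have dW: "Wo x (u * v) = Wo x u * v + u * Wo x v" for u v using derD[OF W_der[OF x]] .
  have dR: "Ro x (u * v) = Ro x u * v + u * Ro x v" for u v using derD[OF R_der[OF x]] .
  show ?thesis
    by (simp add: brA_eq tens_simps lmap_diff[OF lmap_triA2] triA_pure dW dR
        distrib_left distrib_right left_diff_distrib right_diff_distrib mult.assoc mult.commute mult.left_commute algebra_simps)
qed

lemma pure7:
  fixes x y z :: "'k::field TPT"
  assumes x: "x \<in> LiePT" and y: "y \<in> LiePT"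
  shows "triA (brA (tens \<alpha> x) (tens \<beta> y)) (tens \<gamma> z) =
    triA (tens \<alpha> x) (triA (tens \<beta> y) (tens \<gamma> z)) - triA (triA (tens \<alpha> x) (tens \<beta> y)) (tens \<gamma> z)
    - triA (tens \<beta> y) (triA (tens \<alpha> x) (tens \<gamma> z)) + triA (triA (tens \<beta> y) (tens \<alpha> x)) (tens \<gamma> z)"
proof -
  have dRx: "Ro x (u * v) = Ro x u * v + u * Ro x v" for u v using derD[OF R_der[OF x]] .
  have dRy: "Ro y (u * v) = Ro y u * v + u * Ro y v" for u v using derD[OF R_der[OF y]] .
  have KWx: "Wo (x * v) Z = Wo x (Wo v Z) - Wo (Wo x v) Z" for v Z using KPD[OF W_K[OF x]] .
  have KWy: "Wo (y * v) Z = Wo y (Wo v Z) - Wo (Wo y v) Z" for v Z using KPD[OF W_K[OF y]] .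
  have KRx: "Ro (x * v) Z = Ro x (Ro v Z) - Ro (Wo x v) Z" for v Z using KPD[OF R_K[OF x]] .
  have KRy: "Ro (y * v) Z = Ro y (Ro v Z) - Ro (Wo y v) Z" for v Z using KPD[OF R_K[OF y]] .
  show ?thesis
    by (simp add: brA_eq tens_simps lmap_diff[OF lmap_triA1] lmap_add[OF lmap_triA2] lmap_add[OF lmap_triA1]
        triA_pure dRx dRy KWx KWy KRx KRy lmap_diff[OF R.Op_lin1] lmap_diff[OF W.Op_lin1]
        distrib_left distrib_right left_diff_distrib right_diff_distrib mult.assoc mult.commute mult.left_commute algebra_simps)
qed



lemma lmap_slice [intro, simp]: "lmap (slice m)"
  by (simp add: slice_def)

lemma lmap_lk_smul: "lmap (\<lambda>\<alpha>. smul (lk \<alpha> m) x)"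
  by (rule lmapI) (simp_all add: lookup_add smul_add_left)

lemma slice_tens: "slice m (tens \<alpha> x) = smul (lk \<alpha> m) (x :: 'k::field TPT)"
proof (rule bilin_ext[where F = "\<lambda>\<alpha> x. slice m (tens \<alpha> x)" and G = "\<lambda>\<alpha> x. smul (lk \<alpha> m) x"])
  show "\<And>x. lmap (\<lambda>\<alpha>. slice m (tens \<alpha> x))" by (rule lmap_comp[OF lmap_slice lmap_tens1])
  show "\<And>\<alpha>. lmap (\<lambda>x. slice m (tens \<alpha> x))" by (rule lmap_comp[OF lmap_slice lmap_tens2])
  show "\<And>x. lmap (\<lambda>\<alpha>. smul (lk \<alpha> m) x)" by (rule lmap_lk_smul)
  show "\<And>\<alpha>. lmap (\<lambda>x. smul (lk \<alpha> m) x)" by (rule lmapI) (simp_all add: smul_add mult.commute)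
  fix m' w
  show "slice m (tens (sg m' 1) (sg w 1)) = smul (lk (sg m' 1) m) (sg w (1::'k))"
    by (simp add: tens_single slice_def lookup_single when_def)
qed

lemma APT_iff: "X \<in> APT \<longleftrightarrow> (\<forall>m. slice m X \<in> LiePT)"
  by (simp add: APT_def)

lemma APT_add: "X \<in> APT \<Longrightarrow> Y \<in> APT \<Longrightarrow> X + Y \<in> APT"
  by (simp add: APT_iff lmap_add[OF lmap_slice] LiePT.add)

lemma APT_smul: "X \<in> APT \<Longrightarrow> smul c X \<in> APT"
  by (simp add: APT_iff lmap_smul[OF lmap_slice] LiePT.smul)

lemma APT_zero: "0 \<in> APT"
  by (simp add: APT_iff lmap_zero[OF lmap_slice] LiePT.zero)

lemma APT_sum: "(\<And>i. i \<in> I \<Longrightarrow> g i \<in> APT) \<Longrightarrow> sum g I \<in> APT"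
  by (induction I rule: infinite_finite_induct) (auto intro: APT_zero APT_add)

lemma APT_tens: "x \<in> LiePT \<Longrightarrow> tens \<alpha> x \<in> APT"
  by (simp add: APT_iff slice_tens LiePT.smul)

lemma APT_decomp:
  fixes X :: "'k::field ATPT"
  shows "X = (\<Sum>m\<in>fst ` ks X. tens (sg m 1) (slice m X))"
proof (rule lin_eq_keys[where f = "\<lambda>X::'k ATPT. X" and g = "\<lambda>Y::'k ATPT. \<Sum>m\<in>fst ` ks X. tens (sg m 1) (slice m Y)"])
  show "lmap (\<lambda>X. X)" by simp
  show "lmap (\<lambda>Y. \<Sum>m\<in>fst ` ks X. tens (sg m 1) (slice m Y))"
    by (rule lmap_sumf) (rule lmap_comp[OF lmap_tens2 lmap_slice])
  fix p assume p: "p \<in> ks X"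
  obtain m0 w where pe: "p = (m0, w)" by (cases p)
  have m0: "m0 \<in> fst ` ks X" using p pe by force
  have "(\<Sum>m\<in>fst ` ks X. tens (sg m 1) (slice m (sg p (1::'k))))
      = (\<Sum>m\<in>fst ` ks X. if m0 = m then tens (sg m 1) (sg w 1) else 0)"
    by (rule sum.cong) (simp_all add: pe slice_def)
  also have "\<dots> = tens (sg m0 1) (sg w 1)"
    using m0 by simp
  also have "\<dots> = sg p 1"
    by (simp add: pe tens_single)
  finally show "sg p (1::'k) = (\<Sum>m\<in>fst ` ks X. tens (sg m 1) (slice m (sg p 1)))"
    by (rule sym)
qed

lemma APT_vanish:
  assumes H: "lmap H" and P: "\<And>m x. x \<in> LiePT \<Longrightarrow> H (tens (sg m 1) x) = 0" and X: "X \<in> APT"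
  shows "H X = 0"
proof -
  have "H X = (\<Sum>m\<in>fst ` ks X. H (tens (sg m 1) (slice m X)))"
    by (subst APT_decomp) (simp add: lmap_sum[OF H])
  also have "\<dots> = 0"
    using X P by (simp add: APT_iff)
  finally show ?thesis .
qed

lemma APT_closed:
  assumes H: "lmap H" and P: "\<And>m x. x \<in> LiePT \<Longrightarrow> H (tens (sg m 1) x) \<in> APT" and X: "X \<in> APT"
  shows "H X \<in> APT"
proof -
  have "H X = (\<Sum>m\<in>fst ` ks X. H (tens (sg m 1) (slice m X)))"
    by (subst APT_decomp) (simp add: lmap_sum[OF H])
  also have "\<dots> \<in> APT"
    apply (rule APT_sum)
    apply (rule P)
    using X by (simp add: APT_iff)
  finally show ?thesis .
qed

lemma tri_ext:
  assumes F1: "\<And>Y Z. lmap (\<lambda>X. F X Y Z)" and F2: "\<And>X Z. lmap (\<lambda>Y. F X Y Z)" and F3: "\<And>X Y. lmap (\<lambda>Z. F X Y Z)"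
    and G1: "\<And>Y Z. lmap (\<lambda>X. G X Y Z)" and G2: "\<And>X Z. lmap (\<lambda>Y. G X Y Z)" and G3: "\<And>X Y. lmap (\<lambda>Z. G X Y Z)"
    and P: "\<And>\<alpha> \<beta> \<gamma> x y z. x \<in> LiePT \<Longrightarrow> y \<in> LiePT \<Longrightarrow> z \<in> LiePT \<Longrightarrow>
       F (tens \<alpha> x) (tens \<beta> y) (tens \<gamma> z) = G (tens \<alpha> x) (tens \<beta> y) (tens \<gamma> (z :: 'k::field TPT))"
    and X: "X \<in> APT" and Y: "Y \<in> APT" and Z: "Z \<in> APT"
  shows "F X Y Z = (G X Y Z :: 'b \<Rightarrow>\<^sub>0 'k)"
proof -
  have s1: "F (tens \<alpha> x) (tens \<beta> y) Z - G (tens \<alpha> x) (tens \<beta> y) Z = 0"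
    if "x \<in> LiePT" "y \<in> LiePT" "Z \<in> APT" for \<alpha> \<beta> x y Z
    by (rule APT_vanish[OF lmap_minus[OF F3 G3] _ that(3)]) (simp add: P that)
  have s2: "F (tens \<alpha> x) Y Z - G (tens \<alpha> x) Y Z = 0"
    if "x \<in> LiePT" "Y \<in> APT" "Z \<in> APT" for \<alpha> x Y Z
    by (rule APT_vanish[OF lmap_minus[OF F2 G2] _ that(2)]) (simp add: s1 that)
  have "F X Y Z - G X Y Z = 0"
    by (rule APT_vanish[OF lmap_minus[OF F1 G1] _ X]) (simp add: s2 Y Z)
  then show ?thesis by simp
qed

lemma brA_pure: "brA (tens \<alpha> x) (tens \<beta> y) = tens (\<alpha> * \<beta>) (x * y - y * (x :: 'k::field TPT))"
  by (simp add: brA_eq tens_mult tens_diff2 mult.commute)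

lemma brA_APT: "X \<in> APT \<Longrightarrow> Y \<in> APT \<Longrightarrow> brA X Y \<in> APT"
proof -
  assume X: "X \<in> APT" and Y: "Y \<in> APT"
  have "brA (tens (sg m 1) x) Y \<in> APT" if x: "x \<in> LiePT" for m x
    by (rule APT_closed[OF lmap_brA2 _ Y]) (simp add: brA_pure APT_tens LiePT_comm x)
  then show ?thesis by (rule APT_closed[OF lmap_brA1 _ X])
qed

lemma triA_APT: "X \<in> APT \<Longrightarrow> Y \<in> APT \<Longrightarrow> triA X Y \<in> APT"
proof -
  assume X: "X \<in> APT" and Y: "Y \<in> APT"
  have "triA (tens (sg m 1) x) Y \<in> APT" if x: "x \<in> LiePT" for m x
    by (rule APT_closed[OF lmap_triA2 _ Y]) (simp add: triA_pure APT_tens APT_add W_pres x)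
  then show ?thesis by (rule APT_closed[OF lmap_triA1 _ X])
qed

theorem mainTheorem2:
  fixes APTk :: "'k::field ATPT set"
  defines "APTk \<equiv> APT"
  shows
   "(\<forall>X\<in>APTk. \<forall>Y\<in>APTk. \<forall>c::'k. X + Y \<in> APTk \<and> smul c X \<in> APTk) \<and>
    (\<forall>X\<in>APTk. \<forall>Y\<in>APTk. brA X Y \<in> APTk \<and> triA X Y \<in> APTk) \<and>
    (\<forall>X\<in>APTk. \<forall>Y\<in>APTk. \<forall>Z\<in>APTk. \<forall>c::'k.
        brA (X + Y) Z = brA X Z + brA Y Z \<and> brA Z (X + Y) = brA Z X + brA Z Y \<and>
        brA (smul c X) Y = smul c (brA X Y) \<and> brA X (smul c Y) = smul c (brA X Y) \<and>
        triA (X + Y) Z = triA X Z + triA Y Z \<and> triA Z (X + Y) = triA Z X + triA Z Y \<and>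
        triA (smul c X) Y = smul c (triA X Y) \<and> triA X (smul c Y) = smul c (triA X Y)) \<and>
    (\<forall>X\<in>APTk. brA X X = 0) \<and>
    (\<forall>X\<in>APTk. \<forall>Y\<in>APTk. \<forall>Z\<in>APTk.
        brA X (brA Y Z) + brA Y (brA Z X) + brA Z (brA X Y) = 0) \<and>
    (\<forall>X\<in>APTk. \<forall>Y\<in>APTk. \<forall>Z\<in>APTk.
        triA X (brA Y Z) = brA (triA X Y) Z + brA Y (triA X Z)) \<and>
    (\<forall>X\<in>APTk. \<forall>Y\<in>APTk. \<forall>Z\<in>APTk.
        triA (brA X Y) Z = triA X (triA Y Z) - triA (triA X Y) Z - triA Y (triA X Z) + triA (triA Y X) Z)"
proof (intro conjI ballI allI)
  fix X Y :: "'k ATPT" and c :: 'k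
  assume "X \<in> APTk" "Y \<in> APTk"
  then show "X + Y \<in> APTk" "smul c X \<in> APTk"
    by (simp_all add: APTk_def APT_add APT_smul)
next
  fix X Y :: "'k ATPT"
  assume "X \<in> APTk" "Y \<in> APTk"
  then show "brA X Y \<in> APTk" "triA X Y \<in> APTk"
    by (simp_all add: APTk_def brA_APT triA_APT)
next
  fix X Y Z :: "'k ATPT" and c :: 'k
  show "brA (X + Y) Z = brA X Z + brA Y Z" by (rule lmap_add[OF lmap_brA1])
  show "brA Z (X + Y) = brA Z X + brA Z Y" by (rule lmap_add[OF lmap_brA2])
  show "brA (smul c X) Y = smul c (brA X Y)" by (rule lmap_smul[OF lmap_brA1])
  show "brA X (smul c Y) = smul c (brA X Y)" by (rule lmap_smul[OF lmap_brA2])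
  show "triA (X + Y) Z = triA X Z + triA Y Z" by (rule lmap_add[OF lmap_triA1])
  show "triA Z (X + Y) = triA Z X + triA Z Y" by (rule lmap_add[OF lmap_triA2])
  show "triA (smul c X) Y = smul c (triA X Y)" by (rule lmap_smul[OF lmap_triA1])
  show "triA X (smul c Y) = smul c (triA X Y)" by (rule lmap_smul[OF lmap_triA2])
next
  fix X :: "'k ATPT"
  show "brA X X = 0" by (simp add: brA_eq)
next
  fix X Y Z :: "'k ATPT"
  show "brA X (brA Y Z) + brA Y (brA Z X) + brA Z (brA X Y) = 0"
    by (simp add: brA_eq algebra_simps)
next
  fix X Y Z :: "'k ATPT"
  assume X: "X \<in> APTk" and Y: "Y \<in> APTk" and Z: "Z \<in> APTk"
  show "triA X (brA Y Z) = brA (triA X Y) Z + brA Y (triA X Z)"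
  proof (rule tri_ext[where F = "\<lambda>X Y Z. triA X (brA Y Z)" and G = "\<lambda>X Y Z. brA (triA X Y) Z + brA Y (triA X Z)"])
    show "\<And>Y Z. lmap (\<lambda>X. triA X (brA Y Z))" by (rule lmap_triA1)
    show "\<And>X Z. lmap (\<lambda>Y. triA X (brA Y Z))" by (rule lmap_comp[OF lmap_triA2 lmap_brA1])
    show "\<And>X Y. lmap (\<lambda>Z. triA X (brA Y Z))" by (rule lmap_comp[OF lmap_triA2 lmap_brA2])
    show "\<And>Y Z. lmap (\<lambda>X. brA (triA X Y) Z + brA Y (triA X Z))"
      by (rule lmap_plus[OF lmap_comp[OF lmap_brA1 lmap_triA1] lmap_comp[OF lmap_brA2 lmap_triA1]])
    show "\<And>X Z. lmap (\<lambda>Y. brA (triA X Y) Z + brA Y (triA X Z))"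
      by (rule lmap_plus[OF lmap_comp[OF lmap_brA1 lmap_triA2] lmap_brA1])
    show "\<And>X Y. lmap (\<lambda>Z. brA (triA X Y) Z + brA Y (triA X Z))"
      by (rule lmap_plus[OF lmap_brA2 lmap_comp[OF lmap_brA2 lmap_triA2]])
    show "\<And>\<alpha> \<beta> \<gamma> x y z. x \<in> LiePT \<Longrightarrow> y \<in> LiePT \<Longrightarrow> z \<in> LiePT \<Longrightarrow>
       triA (tens \<alpha> x) (brA (tens \<beta> y) (tens \<gamma> z)) =
       brA (triA (tens \<alpha> x) (tens \<beta> y)) (tens \<gamma> z) + brA (tens \<beta> y) (triA (tens \<alpha> x) (tens \<gamma> (z :: 'k TPT)))"
      by (rule pure6)
  qed (use X Y Z in \<open>simp_all add: APTk_def\<close>)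
next
  fix X Y Z :: "'k ATPT"
  assume X: "X \<in> APTk" and Y: "Y \<in> APTk" and Z: "Z \<in> APTk"
  show "triA (brA X Y) Z = triA X (triA Y Z) - triA (triA X Y) Z - triA Y (triA X Z) + triA (triA Y X) Z"
  proof (rule tri_ext[where F = "\<lambda>X Y Z. triA (brA X Y) Z" and
        G = "\<lambda>X Y Z. triA X (triA Y Z) - triA (triA X Y) Z - triA Y (triA X Z) + triA (triA Y X) Z"])
    show "\<And>Y Z. lmap (\<lambda>X. triA (brA X Y) Z)" by (rule lmap_comp[OF lmap_triA1 lmap_brA1])
    show "\<And>X Z. lmap (\<lambda>Y. triA (brA X Y) Z)" by (rule lmap_comp[OF lmap_triA1 lmap_brA2])
    show "\<And>X Y. lmap (\<lambda>Z. triA (brA X Y) Z)" by (rule lmap_triA2)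
    show "\<And>Y Z. lmap (\<lambda>X. triA X (triA Y Z) - triA (triA X Y) Z - triA Y (triA X Z) + triA (triA Y X) Z)"
      by (rule lmap_plus[OF lmap_minus[OF lmap_minus[OF lmap_triA1 lmap_comp[OF lmap_triA1 lmap_triA1]]
            lmap_comp[OF lmap_triA2 lmap_triA1]] lmap_comp[OF lmap_triA1 lmap_triA2]])
    show "\<And>X Z. lmap (\<lambda>Y. triA X (triA Y Z) - triA (triA X Y) Z - triA Y (triA X Z) + triA (triA Y X) Z)"
      by (rule lmap_plus[OF lmap_minus[OF lmap_minus[OF lmap_comp[OF lmap_triA2 lmap_triA1] lmap_comp[OF lmap_triA1 lmap_triA2]]
            lmap_triA1] lmap_comp[OF lmap_triA1 lmap_triA1]])
    show "\<And>X Y. lmap (\<lambda>Z. triA X (triA Y Z) - triA (triA X Y) Z - triA Y (triA X Z) + triA (triA Y X) Z)"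
      by (rule lmap_plus[OF lmap_minus[OF lmap_minus[OF lmap_comp[OF lmap_triA2 lmap_triA2] lmap_triA2]
            lmap_comp[OF lmap_triA2 lmap_triA2]] lmap_triA2])
    show "\<And>\<alpha> \<beta> \<gamma> x y z. x \<in> LiePT \<Longrightarrow> y \<in> LiePT \<Longrightarrow> z \<in> LiePT \<Longrightarrow>
       triA (brA (tens \<alpha> x) (tens \<beta> y)) (tens \<gamma> z) =
       triA (tens \<alpha> x) (triA (tens \<beta> y) (tens \<gamma> z)) - triA (triA (tens \<alpha> x) (tens \<beta> y)) (tens \<gamma> z)
       - triA (tens \<beta> y) (triA (tens \<alpha> x) (tens \<gamma> z)) + triA (triA (tens \<beta> y) (tens \<alpha> x)) (tens \<gamma> (z :: 'k TPT))"
      by (rule pure7)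
  qed (use X Y Z in \<open>simp_all add: APTk_def\<close>)
qed


end
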